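(* Let $V$ be a braided vector space of diagonal type over a field $F$ of characteristic zero with basis $x_1,\dots,x_n$ and braiding $C(x_i\otimes x_j)=p_{i,j}x_j\otimes x_i$, and let $\mathfrak B(V)$ be its Nichols algebra. The following are equivalent: (1) $\mathfrak B(V)=F\oplus\mathfrak L(V)_L$; (2) $\mathfrak B(V)=F\oplus\mathfrak L^-(V)$; (3) $p_{i,i}=-1$ and $p_{i,j}p_{j,i}=1$ for all $1\le i\ne j\le n$, and for every $m\ge2$ and every strictly decreasing sequence of letters $h_1>h_2>\cdots>h_m$ in $\{x_1,\dots,x_n\}$ (with $x_1<\cdots<x_n$) there exists $\tau\in\mathbb S_m$ such that $\prod_{j=1}^{m-1}\bigl(p_{h_{\tau(j)},\,h_{\tau(m)}\cdots h_{\tau(j+1)}}-1\bigr)\neq0$.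
   Context: $\mathfrak B(V)=T(V)/\bigoplus_{m\ge2}\ker S_m$ is $\mathbb Z^n$-graded with $\deg x_i=e_i$; for homogeneous $u,v$ with $\deg u=\sum a_ie_i$, $\deg v=\sum b_je_j$ put $p_{u,v}=\prod p_{i,j}^{a_ib_j}$. $\mathfrak L(V)_L$ is the Lie subalgebra of $\mathfrak B(V)$ generated by $V$ under $[u,v]_L=p_{v,u}uv-p_{u,v}vu$; $\mathfrak L^-(V)$ is the Lie subalgebra generated by $V$ under $[u,v]^-=uv-vu$; $F$ denotes the scalars $F\cdot1$ and equalities are as vector spaces. *)

theory Defs
  imports "HOL-Combinatorics.Permutations"
begin

text \<open>Tensor algebra T(V) on basis x_0..x_{n-1}: elements are finitely supported
 functions from words (lists of letter indices < n) to the field.\<close>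

type_synonym 'a tens = "nat list \<Rightarrow> 'a"

definition in_T :: "nat \<Rightarrow> 'a::field tens \<Rightarrow> bool" where
  "in_T n f \<longleftrightarrow> finite {w. f w \<noteq> 0} \<and> (\<forall>w. f w \<noteq> 0 \<longrightarrow> set w \<subseteq> {..<n})"

definition tmul :: "'a::field tens \<Rightarrow> 'a tens \<Rightarrow> 'a tens" where
  "tmul f g = (\<lambda>w. \<Sum>k\<in>{..length w}. f (take k w) * g (drop k w))"

definition tone :: "'a::field tens" where
  "tone = (\<lambda>w. if w = [] then 1 else 0)"

definition letter :: "nat \<Rightarrow> 'a::field tens" where
  "letter i = (\<lambda>w. if w = [i] then 1 else 0)"

text \<open>p_{u,v} for homogeneous elements of degrees given by the words u, v.\<close>
definition pw :: "(nat \<Rightarrow> nat \<Rightarrow> 'a::field) \<Rightarrow> nat list \<Rightarrow> nat list \<Rightarrow> 'a" where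
  "pw p u v = (\<Prod>i<length u. \<Prod>j<length v. p (u ! i) (v ! j))"

datatype btree = Leaf nat | Node btree btree

fun leaves :: "btree \<Rightarrow> nat list" where
  "leaves (Leaf i) = [i]"
| "leaves (Node s t) = leaves s @ leaves t"

fun evL :: "(nat \<Rightarrow> nat \<Rightarrow> 'a::field) \<Rightarrow> btree \<Rightarrow> 'a tens" where
  "evL p (Leaf i) = letter i"
| "evL p (Node s t) = (\<lambda>w. pw p (leaves t) (leaves s) * tmul (evL p s) (evL p t) w
                          - pw p (leaves s) (leaves t) * tmul (evL p t) (evL p s) w)"

fun evM :: "btree \<Rightarrow> 'a::field tens" where
  "evM (Leaf i) = letter i"
| "evM (Node s t) = (\<lambda>w. tmul (evM s) (evM t) w - tmul (evM t) (evM s) w)"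

definition tspan :: "'a::field tens set \<Rightarrow> 'a tens set" where
  "tspan S = {f. \<exists>(m::nat) c g. (\<forall>k<m. g k \<in> S) \<and> f = (\<lambda>w. \<Sum>k<m. c k * g k w)}"

definition lie_L :: "nat \<Rightarrow> (nat \<Rightarrow> nat \<Rightarrow> 'a::field) \<Rightarrow> 'a tens set" where
  "lie_L n p = tspan (evL p ` {t. set (leaves t) \<subseteq> {..<n}})"

definition lie_minus :: "nat \<Rightarrow> 'a::field tens set" where
  "lie_minus n = tspan (evM ` {t. set (leaves t) \<subseteq> {..<n}})"

text \<open>Quantum symmetrizer S_m for the diagonal braiding C(x_i \<otimes> x_j) = p_{i,j} x_j \<otimes> x_i.\<close>
definition perm_word :: "nat list \<Rightarrow> (nat \<Rightarrow> nat) \<Rightarrow> nat list" where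
  "perm_word u \<sigma> = map (\<lambda>k. u ! (\<sigma> k)) [0..<length u]"

definition sym_coef :: "(nat \<Rightarrow> nat \<Rightarrow> 'a::field) \<Rightarrow> nat list \<Rightarrow> (nat \<Rightarrow> nat) \<Rightarrow> 'a" where
  "sym_coef p u \<sigma> = (\<Prod>l<length u. \<Prod>k<l. if \<sigma> l < \<sigma> k then p (u ! (\<sigma> l)) (u ! (\<sigma> k)) else 1)"

definition symm :: "nat \<Rightarrow> (nat \<Rightarrow> nat \<Rightarrow> 'a::field) \<Rightarrow> nat \<Rightarrow> 'a tens \<Rightarrow> 'a tens" where
  "symm n p m f = (\<lambda>w. \<Sum>u\<in>{u. length u = m \<and> set u \<subseteq> {..<n}}.
      f u * (\<Sum>\<sigma>\<in>{\<sigma>. \<sigma> permutes {..<m} \<and> perm_word u \<sigma> = w}. sym_coef p u \<sigma>))"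

definition comp :: "nat \<Rightarrow> 'a::field tens \<Rightarrow> 'a tens" where
  "comp m f = (\<lambda>w. if length w = m then f w else 0)"

definition nichols_ideal :: "nat \<Rightarrow> (nat \<Rightarrow> nat \<Rightarrow> 'a::field) \<Rightarrow> 'a tens set" where
  "nichols_ideal n p = {f. in_T n f \<and> f [] = 0 \<and> (\<forall>w. length w = 1 \<longrightarrow> f w = 0)
      \<and> (\<forall>m\<ge>2. symm n p m (comp m f) = (\<lambda>_. 0))}"

text \<open>B(V) = F \<oplus> L, where L is given by its preimage-generating set in T(V)
  and B(V) = T(V)/I.\<close>
definition B_eq_F_plus :: "nat \<Rightarrow> (nat \<Rightarrow> nat \<Rightarrow> 'a::field) \<Rightarrow> 'a tens set \<Rightarrow> bool" where
  "B_eq_F_plus n p L \<longleftrightarrow>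
     (\<forall>f. in_T n f \<longrightarrow> (\<exists>c l. l \<in> L \<and> (\<lambda>w. f w - c * tone w - l w) \<in> nichols_ideal n p))
   \<and> (\<forall>c l. l \<in> L \<and> (\<lambda>w. c * tone w + l w) \<in> nichols_ideal n p \<longrightarrow> c = 0 \<and> l \<in> nichols_ideal n p)"

end

theory Submission
  imports Defs
begin



lemma idx_prod: "(\<Prod>i<length u. G (u!i)) = prod_mset (image_mset G (mset u))"
  by (induction u) (simp_all add: prod.lessThan_Suc_shift del: prod.lessThan_Suc)

lemma tmul_Nil: "tmul f g [] = f [] * g []"
  by (simp add: tmul_def)

lemma tmul_Cons: "tmul f g (a#w) = f [] * g (a#w) + tmul (\<lambda>u. f (a#u)) g w"
  unfolding tmul_def by (simp add: sum.atMost_Suc_shift del: sum.atMost_Suc)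

lemma tmul_assoc: "tmul (tmul f g) h w = tmul f (tmul g h) w"
proof (induction w arbitrary: f g)
  case Nil then show ?case by (simp add: tmul_Nil)
next
  case (Cons a w)
  have e: "(\<lambda>u. tmul f g (a#u)) = (\<lambda>u. f [] * g (a#u) + tmul (\<lambda>u. f (a#u)) g u)"
    by (simp add: tmul_Cons)
  have lin: "tmul (\<lambda>u. c * F u + G u) h w = c * tmul F h w + tmul G h w" for c F G w
    by (simp add: tmul_def sum.distrib sum_distrib_left algebra_simps)
  show ?case
    by (simp add: tmul_Cons tmul_Nil e lin Cons.IH algebra_simps)
qed

lemma tmul_ext_assoc: "tmul (tmul f g) h = tmul f (tmul g h)"
  using tmul_assoc by blast

lemma tmul_sum_left: "tmul (\<lambda>w. \<Sum>k<m. c k * g k w) f w = (\<Sum>k<m. c k * tmul (g k) f w)"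
  by (simp add: tmul_def sum_distrib_left sum_distrib_right mult.assoc sum.swap[of _ "{..<m}"])

lemma tmul_sum_right: "tmul f (\<lambda>w. \<Sum>k<m. c k * g k w) w = (\<Sum>k<m. c k * tmul f (g k) w)"
  by (simp add: tmul_def sum_distrib_left sum_distrib_right algebra_simps sum.swap[of _ "{..<m}"])

lemma tmul_diff_left: "tmul (\<lambda>w. f w - g w) h = (\<lambda>w. tmul f h w - tmul g h w)"
  by (simp add: tmul_def algebra_simps sum_subtractf)
lemma tmul_diff_right: "tmul h (\<lambda>w. f w - g w) = (\<lambda>w. tmul h f w - tmul h g w)"
  by (simp add: tmul_def algebra_simps sum_subtractf)

lemma tmul_zero_left[simp]: "tmul (\<lambda>u. 0) g w = 0" by (simp add: tmul_def)

lemma tmul_letter_letter: "tmul (letter i) (letter j) = (\<lambda>w. if w = [i,j] then 1 else 0)"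
proof
  fix w :: "nat list"
  show "tmul (letter i) (letter j) w = (if w = [i,j] then 1 else 0)"
  proof (cases w)
    case Nil then show ?thesis by (simp add: tmul_Nil letter_def)
  next
    case (Cons a u)
    then show ?thesis
      by (cases u) (auto simp: tmul_Cons tmul_Nil letter_def)
  qed
qed




lemma tspanE: assumes "f \<in> tspan S" obtains m :: nat and c G where "\<forall>k<m. G k \<in> S" "f = (\<lambda>w. \<Sum>k<m. c k * G k w)"
  using assms unfolding tspan_def mem_Collect_eq by metis

lemma tspanI: "\<forall>k<(m::nat). G k \<in> S \<Longrightarrow> (\<lambda>w. \<Sum>k<m. c k * G k w) \<in> tspan S"
  unfolding tspan_def by blast

lemma tspan_zero: "(\<lambda>w. 0) \<in> tspan S"
  unfolding tspan_def by (rule CollectI, rule exI[of _ 0]) auto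

lemma tspan_step:
  assumes "f \<in> tspan S" "g \<in> S"
  shows "(\<lambda>w. f w + a * g w) \<in> tspan S"
proof -
  from assms(1) obtain m :: nat and c G where G: "\<forall>k<m. G k \<in> S" and f: "f = (\<lambda>w. \<Sum>k<m. c k * G k w)"
    unfolding tspan_def by blast
  have "(\<lambda>w. f w + a * g w) = (\<lambda>w. \<Sum>k<Suc m. (c(m:=a)) k * (G(m:=g)) k w)"
    by (simp add: f)
  moreover have "\<forall>k<Suc m. (G(m:=g)) k \<in> S" using G assms(2) by auto
  ultimately show ?thesis using tspanI[of "Suc m" "G(m:=g)" S "c(m:=a)"] by simp
qed

lemma tspan_base: "g \<in> S \<Longrightarrow> g \<in> tspan S"
  using tspan_step[OF tspan_zero, of g S 1] by simp

lemma tspan_add: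
  assumes "f \<in> tspan S" "g \<in> tspan S"
  shows "(\<lambda>w. f w + g w) \<in> tspan S"
proof -
  from assms(2) obtain m :: nat and c G where G: "\<forall>k<m. G k \<in> S" and g: "g = (\<lambda>w. \<Sum>k<m. c k * G k w)"
    unfolding tspan_def by blast
  have "\<forall>m'\<le>m. (\<lambda>w. f w + (\<Sum>k<m'. c k * G k w)) \<in> tspan S"
  proof (intro allI impI)
    fix m' assume "m' \<le> m"
    then show "(\<lambda>w. f w + (\<Sum>k<m'. c k * G k w)) \<in> tspan S"
    proof (induction m')
      case 0 then show ?case using assms(1) by simp
    next
      case (Suc m')
      then have "(\<lambda>w. (f w + (\<Sum>k<m'. c k * G k w)) + c m' * G m' w) \<in> tspan S"
        using tspan_step[of "\<lambda>w. f w + (\<Sum>k<m'. c k * G k w)" S "G m'" "c m'"] G by simp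
      then show ?case by (simp add: add.assoc)
    qed
  qed
  then show ?thesis using g by auto
qed

lemma tspan_smult:
  assumes "f \<in> tspan S"
  shows "(\<lambda>w. a * f w) \<in> tspan S"
proof -
  from assms obtain m :: nat and c G where G: "\<forall>k<m. G k \<in> S" and f: "f = (\<lambda>w. \<Sum>k<m. c k * G k w)"
    unfolding tspan_def by blast
  have "(\<lambda>w. a * f w) = (\<lambda>w. \<Sum>k<m. (a * c k) * G k w)"
    by (simp add: f sum_distrib_left mult.assoc)
  then show ?thesis using tspanI[OF G, of "\<lambda>k. a * c k"] by simp
qed

lemma tspan_diff:
  assumes "f \<in> tspan S" "g \<in> tspan S"
  shows "(\<lambda>w. f w - g w) \<in> tspan S"
proof -
  have "(\<lambda>w. f w - g w) = (\<lambda>w. f w + (-1) * g w)" by simp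
  then show ?thesis using tspan_add[OF assms(1) tspan_smult[OF assms(2), of "-1"]] by metis
qed

lemma tspan_sum:
  assumes "\<forall>k<(m::nat). g k \<in> tspan S"
  shows "(\<lambda>w. \<Sum>k<m. c k * g k w) \<in> tspan S"
  using assms
proof (induction m)
  case 0 then show ?case using tspan_zero by simp
next
  case (Suc m)
  then show ?case using tspan_add[OF Suc.IH tspan_smult[of "g m" S "c m"]] by simp
qed

lemma tspan_mono: "S \<subseteq> T \<Longrightarrow> tspan S \<subseteq> tspan T"
  unfolding tspan_def by blast

lemma tspan_linear:
  fixes \<Phi> :: "'a::field tens \<Rightarrow> 'a"
  assumes "f \<in> tspan S"
    and lin: "\<And>(m::nat) c g. \<Phi> (\<lambda>w. \<Sum>k<m. c k * g k w) = (\<Sum>k<m. c k * \<Phi> (g k))"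
    and z: "\<And>g. g \<in> S \<Longrightarrow> \<Phi> g = 0"
  shows "\<Phi> f = 0"
proof -
  from assms(1) obtain m :: nat and c G where G: "\<forall>k<m. G k \<in> S" and f: "f = (\<lambda>w. \<Sum>k<m. c k * G k w)"
    unfolding tspan_def by blast
  have "\<Phi> f = (\<Sum>k<m. c k * \<Phi> (G k))" unfolding f by (rule lin)
  then show ?thesis using G z by simp
qed

definition br :: "'a::field tens \<Rightarrow> 'a tens \<Rightarrow> 'a tens" where
  "br f g = (\<lambda>w. tmul f g w - tmul g f w)"

lemma evM_Node: "evM (Node s t) = br (evM s) (evM t)"
  by (simp add: br_def)

lemma jac_arith: "(x1 - x2 - (x3 - x4)) = (x1 - x5 - (x6 - x4)) - (x2 - x6 - (x5 - x3::'a::ab_group_add))"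
  by (simp add: algebra_simps)

lemma jacobi: "br (br a u) v = (\<lambda>w. br a (br u v) w - br u (br a v) w)"
proof
  fix w
  have 1: "br (br a u) v w = tmul (tmul a u) v w - tmul (tmul u a) v w - (tmul v (tmul a u) w - tmul v (tmul u a) w)"
    unfolding br_def tmul_diff_left tmul_diff_right by simp
  have 2: "br a (br u v) w = tmul a (tmul u v) w - tmul a (tmul v u) w - (tmul (tmul u v) a w - tmul (tmul v u) a w)"
    unfolding br_def tmul_diff_left tmul_diff_right by simp
  have 3: "br u (br a v) w = tmul u (tmul a v) w - tmul u (tmul v a) w - (tmul (tmul a v) u w - tmul (tmul v a) u w)"
    unfolding br_def tmul_diff_left tmul_diff_right by simp
  show "br (br a u) v w = br a (br u v) w - br u (br a v) w"
    unfolding 1 2 3 tmul_ext_assoc by (rule jac_arith)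
qed

lemma br_sum_right: "br f (\<lambda>w. \<Sum>k<m. c k * g k w) = (\<lambda>w. \<Sum>k<m. c k * br f (g k) w)"
  unfolding br_def by (simp add: tmul_sum_left tmul_sum_right algebra_simps sum_subtractf)

lemma br_sum_left: "br (\<lambda>w. \<Sum>k<m. c k * g k w) f = (\<lambda>w. \<Sum>k<m. c k * br (g k) f w)"
  unfolding br_def by (simp add: tmul_sum_left tmul_sum_right algebra_simps sum_subtractf)

fun RN :: "nat list \<Rightarrow> btree" where
  "RN [] = Leaf 0"
| "RN [a] = Leaf a"
| "RN (a#b#zs) = Node (Leaf a) (RN (b#zs))"

lemma leaves_RN: "zs \<noteq> [] \<Longrightarrow> leaves (RN zs) = zs"
  by (induction zs rule: RN.induct) auto

definition RNS :: "nat multiset \<Rightarrow> 'a::field tens set" where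
  "RNS M = {evM (RN zs) | zs. zs \<noteq> [] \<and> mset zs = M}"

lemma br_letter_span:
  assumes "v \<in> tspan (RNS N)"
  shows "br (letter a) v \<in> tspan (RNS (add_mset a N))"
proof -
  from assms obtain m :: nat and c G where G: "\<forall>k<m. G k \<in> RNS N" and v: "v = (\<lambda>w. \<Sum>k<m. c k * G k w)"
    unfolding tspan_def by blast
  have "br (letter a) (G k) \<in> tspan (RNS (add_mset a N))" if "k < m" for k
  proof -
    from G that obtain zs where zs: "zs \<noteq> []" "mset zs = N" "G k = evM (RN zs)"
      unfolding RNS_def by blast
    then obtain b ys where "zs = b # ys" by (cases zs) auto
    then have "br (letter a) (G k) = evM (RN (a # zs))" using zs by (simp add: br_def)
    moreover have "evM (RN (a # zs)) \<in> RNS (add_mset a N)" unfolding RNS_def using zs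
      by (intro CollectI exI[of _ "a#zs"]) auto
    ultimately show ?thesis by (metis tspan_base)
  qed
  then show ?thesis unfolding v br_sum_right by (intro tspan_sum) auto
qed

lemma br_RN_span:
  assumes "zs \<noteq> []" "v \<in> tspan (RNS N)"
  shows "br (evM (RN zs)) v \<in> tspan (RNS (mset zs + N))"
  using assms
proof (induction zs arbitrary: N v rule: RN.induct)
  case 1 then show ?case by simp
next
  case (2 a) then show ?case using br_letter_span[of v N a] by simp
next
  case (3 a b zs)
  let ?U = "evM (RN (b#zs)) :: 'a tens"
  have e: "evM (RN (a#b#zs)) = br (letter a) ?U" by (simp add: br_def)
  have h1: "br ?U v \<in> tspan (RNS (mset (b#zs) + N))" using 3 by simp
  have h2: "br (letter a) (br ?U v) \<in> tspan (RNS (mset (a#b#zs) + N))"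
    using br_letter_span[OF h1, of a] by simp
  have h3: "br (letter a) v \<in> tspan (RNS (add_mset a N))" using br_letter_span[OF 3(3)] .
  have h4: "br ?U (br (letter a) v) \<in> tspan (RNS (mset (a#b#zs) + N))"
    using 3(1)[OF _ h3] by simp
  show ?case unfolding e jacobi by (rule tspan_diff[OF h2 h4])
qed

lemma evM_span: "evM t \<in> tspan (RNS (mset (leaves t)))"
proof (induction t)
  case (Leaf i)
  have "(evM (RN [i]) :: 'a tens) \<in> RNS (mset [i])" unfolding RNS_def by blast
  then show ?case by (metis tspan_base evM.simps(1) RN.simps(2) leaves.simps(1) mset.simps)
next
  case (Node s t)
  from Node.IH(1) obtain m :: nat and c and G :: "nat \<Rightarrow> 'a tens" where G: "\<forall>k<m. G k \<in> RNS (mset (leaves s))"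
    and v: "evM s = (\<lambda>w. \<Sum>k<m. c k * G k w)" by (rule tspanE)
  have "br (G k) (evM t) \<in> tspan (RNS (mset (leaves (Node s t))))" if "k < m" for k
  proof -
    from G that obtain zs where zs: "zs \<noteq> []" "mset zs = mset (leaves s)" "G k = evM (RN zs)"
      unfolding RNS_def by blast
    show ?thesis using br_RN_span[OF zs(1) Node.IH(2)] zs by simp
  qed
  then show ?case unfolding evM_Node v br_sum_left by (intro tspan_sum) auto
qed




definition rowM :: "(nat \<Rightarrow> nat \<Rightarrow> 'a::field) \<Rightarrow> nat \<Rightarrow> nat multiset \<Rightarrow> 'a" where
  "rowM p a B = prod_mset (image_mset (\<lambda>b. if b < a then p a b else 1) B)"

definition crossM :: "(nat \<Rightarrow> nat \<Rightarrow> 'a::field) \<Rightarrow> nat multiset \<Rightarrow> nat multiset \<Rightarrow> 'a" where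
  "crossM p A B = prod_mset (image_mset (\<lambda>a. rowM p a B) A)"

definition pwM :: "(nat \<Rightarrow> nat \<Rightarrow> 'a::field) \<Rightarrow> nat multiset \<Rightarrow> nat multiset \<Rightarrow> 'a" where
  "pwM p A B = prod_mset (image_mset (\<lambda>a. prod_mset (image_mset (\<lambda>b. p a b) B)) A)"

definition chi :: "(nat \<Rightarrow> nat \<Rightarrow> 'a::field) \<Rightarrow> nat list \<Rightarrow> 'a" where
  "chi p u = (\<Prod>l<length u. \<Prod>k<l. if u!l < u!k then p (u!k) (u!l) else 1)"

definition Phi :: "(nat \<Rightarrow> nat \<Rightarrow> 'a::field) \<Rightarrow> nat multiset \<Rightarrow> 'a tens \<Rightarrow> 'a" where
  "Phi p M f = (\<Sum>u\<in>{u. mset u = M}. f u * chi p u)"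

lemma chi_Nil[simp]: "chi p [] = 1" by (simp add: chi_def)

lemma chi_Cons: "chi p (a#u) = rowM p a (mset u) * chi p u"
proof -
  have r: "rowM p a (mset u) = (\<Prod>l<length u. if u!l < a then p a (u!l) else 1)"
    unfolding rowM_def by (rule idx_prod[symmetric])
  show ?thesis
    unfolding chi_def r length_Cons prod.lessThan_Suc_shift nth_Cons_0 nth_Cons_Suc by (simp add: prod.distrib)
qed

lemma rowM_add: "rowM p a (B + C) = rowM p a B * rowM p a C"
  by (simp add: rowM_def)
lemma rowM_empty[simp]: "rowM p a {#} = 1" by (simp add: rowM_def)

lemma crossM_add_right: "crossM p A (B + C) = crossM p A B * crossM p A C"
  by (simp add: crossM_def rowM_add prod_mset.distrib)
lemma crossM_add_mset_left: "crossM p (add_mset a A) B = rowM p a B * crossM p A B"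
  by (simp add: crossM_def)
lemma crossM_add_left: "crossM p (A + A') B = crossM p A B * crossM p A' B"
  by (simp add: crossM_def)
lemma crossM_empty[simp]: "crossM p {#} B = 1" by (simp add: crossM_def)
lemma crossM_single: "crossM p {#a#} B = rowM p a B" by (simp add: crossM_def)

lemma chi_append: "chi p (u @ v) = chi p u * chi p v * crossM p (mset u) (mset v)"
  by (induction u) (simp_all add: chi_Cons rowM_add crossM_add_mset_left)

lemma fin_perms: "finite {u. mset u = M}"
proof -
  obtain xs where "mset xs = M" using ex_mset by blast
  then show ?thesis using mset_eq_finite[of xs] by simp
qed

lemma Phi_sum: "Phi p M (\<lambda>w. \<Sum>k<(m::nat). c k * g k w) = (\<Sum>k<m. c k * Phi p M (g k))"
  unfolding Phi_def by (simp add: sum_distrib_left sum_distrib_right mult.assoc sum.swap[of _ "{..<m}"])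

lemma Phi_lin: "Phi p M (\<lambda>w. a * f w - b * g w) = a * Phi p M f - b * Phi p M g"
  unfolding Phi_def by (simp add: sum_distrib_left sum_subtractf algebra_simps)

lemma Phi_diff: "Phi p M (\<lambda>w. f w - g w) = Phi p M f - Phi p M g"
  using Phi_lin[of p M 1 f 1 g] by simp

definition supp_in :: "'a::field tens \<Rightarrow> nat multiset \<Rightarrow> bool" where
  "supp_in f A \<longleftrightarrow> (\<forall>w. f w \<noteq> 0 \<longrightarrow> mset w = A)"

lemma supp_letter: "supp_in (letter i) {#i#}"
  by (simp add: supp_in_def letter_def)

lemma supp_tmul:
  assumes "supp_in f A" "supp_in g B"
  shows "supp_in (tmul f g) (A + B)"
  unfolding supp_in_def
proof (intro allI impI)
  fix w assume "tmul f g w \<noteq> 0"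
  then obtain k where "f (take k w) * g (drop k w) \<noteq> 0"
    unfolding tmul_def by (meson sum.not_neutral_contains_not_neutral)
  then have "mset (take k w) = A" "mset (drop k w) = B" using assms unfolding supp_in_def by auto
  then show "mset w = A + B" by (metis append_take_drop_id mset_append)
qed

lemma supp_lin:
  assumes "supp_in f A" "supp_in g A"
  shows "supp_in (\<lambda>w. a * f w - b * g w) A"
  unfolding supp_in_def
proof (intro allI impI)
  fix w assume "a * f w - b * g w \<noteq> 0"
  then have "f w \<noteq> 0 \<or> g w \<noteq> 0" by auto
  then show "mset w = A" using assms unfolding supp_in_def by blast
qed

lemma supp_diff:
  assumes "supp_in f A" "supp_in g A"
  shows "supp_in (\<lambda>w. f w - g w) A"
  using supp_lin[OF assms, of 1 1] by simp

lemma supp_evM: "supp_in (evM t) (mset (leaves t))"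
proof (induction t)
  case (Leaf i) then show ?case by (simp add: supp_letter)
next
  case (Node s t)
  show ?case
    using supp_tmul[OF Node.IH(1) Node.IH(2)] supp_tmul[OF Node.IH(2) Node.IH(1)]
    by (simp, intro supp_diff) (simp_all add: add.commute)
qed

lemma supp_evL: "supp_in (evL p t) (mset (leaves t))"
proof (induction t)
  case (Leaf i) then show ?case by (simp add: supp_letter)
next
  case (Node s t)
  show ?case
    using supp_tmul[OF Node.IH(1) Node.IH(2)] supp_tmul[OF Node.IH(2) Node.IH(1)]
    by (simp, intro supp_lin) (simp_all add: add.commute)
qed

lemma tmul_supp_eval:
  assumes "supp_in f A" "mset w = A + B"
  shows "tmul f g w = f (take (size A) w) * g (drop (size A) w)"
proof -
  have "tmul f g w = (\<Sum>k\<in>{..length w}. if k = size A then f (take k w) * g (drop k w) else 0)"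
    unfolding tmul_def
  proof (rule sum.cong[OF refl])
    fix k assume k: "k \<in> {..length w}"
    show "f (take k w) * g (drop k w) = (if k = size A then f (take k w) * g (drop k w) else 0)"
    proof (cases "k = size A")
      case False
      then have "mset (take k w) \<noteq> A" using k by (metis atMost_iff length_take min.absorb2 size_mset)
      then have "f (take k w) = 0" using assms(1) unfolding supp_in_def by blast
      then show ?thesis using False by simp
    qed simp
  qed
  also have "\<dots> = f (take (size A) w) * g (drop (size A) w)"
  proof -
    have "size A \<le> length w" using assms(2) by (metis le_add1 size_mset size_union)
    then show ?thesis by (simp add: sum.delta)
  qed
  finally show ?thesis .
qed

lemma sum_pairs: "(\<Sum>x\<in>A\<times>B. F (fst x) * G (snd x)) = sum F A * (sum G B :: 'a::comm_semiring_1)"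
proof -
  have "(\<Sum>x\<in>A\<times>B. F (fst x) * G (snd x)) = (\<Sum>(a,b)\<in>A\<times>B. F a * G b)"
    by (simp add: case_prod_beta)
  also have "\<dots> = (\<Sum>a\<in>A. \<Sum>b\<in>B. F a * G b)" by (rule sum.cartesian_product[symmetric])
  also have "\<dots> = sum F A * sum G B" by (simp add: sum_product)
  finally show ?thesis .
qed

lemma Phi_tmul:
  assumes f: "supp_in f A" and g: "supp_in g B"
  shows "Phi p (A + B) (tmul f g) = crossM p A B * Phi p A f * Phi p B g"
proof -
  let ?U = "{u. mset u = A}" and ?V = "{v. mset v = B}" and ?W = "{w. mset w = A + B}"
  let ?h = "\<lambda>w. f (take (size A) w) * g (drop (size A) w) * chi p w"
  have "Phi p (A + B) (tmul f g) = (\<Sum>w\<in>?W. ?h w)"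
    unfolding Phi_def by (rule sum.cong[OF refl]) (simp add: tmul_supp_eval[OF f])
  also have "\<dots> = (\<Sum>w\<in>(\<lambda>(u,v). u @ v) ` (?U \<times> ?V). ?h w)"
  proof (rule sum.mono_neutral_right)
    show "finite ?W" by (rule fin_perms)
    show "(\<lambda>(u,v). u @ v) ` (?U \<times> ?V) \<subseteq> ?W" by auto
    show "\<forall>w\<in>?W - (\<lambda>(u,v). u @ v) ` (?U \<times> ?V). ?h w = 0"
    proof
      fix w assume w: "w \<in> ?W - (\<lambda>(u,v). u @ v) ` (?U \<times> ?V)"
      show "?h w = 0"
      proof (rule ccontr)
        assume "?h w \<noteq> 0"
        then have "mset (take (size A) w) = A" "mset (drop (size A) w) = B"
          using f g unfolding supp_in_def by auto
        then have "w \<in> (\<lambda>(u,v). u @ v) ` (?U \<times> ?V)"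
          by (intro image_eqI[of _ _ "(take (size A) w, drop (size A) w)"]) auto
        then show False using w by blast
      qed
    qed
  qed
  also have "\<dots> = (\<Sum>x\<in>?U \<times> ?V. ?h (fst x @ snd x))"
  proof -
    have inj: "inj_on (\<lambda>(u,v). u @ v) (?U \<times> ?V)"
    proof (rule inj_onI)
      fix x y assume "x \<in> ?U \<times> ?V" "y \<in> ?U \<times> ?V" "(\<lambda>(u,v). u @ v) x = (\<lambda>(u,v). u @ v) y"
      then show "x = y" by (cases x; cases y) (simp, metis append_eq_append_conv size_mset)
    qed
    show ?thesis using sum.reindex[OF inj, of ?h] by (simp add: comp_def case_prod_beta)
  qed
  also have "\<dots> = (\<Sum>x\<in>?U \<times> ?V. crossM p A B * ((\<lambda>u. f u * chi p u) (fst x) * (\<lambda>v. g v * chi p v) (snd x)))"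
  proof (rule sum.cong[OF refl])
    fix x assume "x \<in> ?U \<times> ?V"
    then obtain u v where x: "x = (u, v)" "mset u = A" "mset v = B" by auto
    then have "size A = length u" by auto
    then show "?h (fst x @ snd x) = crossM p A B * ((\<lambda>u. f u * chi p u) (fst x) * (\<lambda>v. g v * chi p v) (snd x))"
      using x by (simp add: chi_append)
  qed
  also have "\<dots> = crossM p A B * ((\<Sum>u\<in>?U. f u * chi p u) * (\<Sum>v\<in>?V. g v * chi p v))"
    unfolding sum_distrib_left[symmetric] by (simp add: sum_pairs[where F="\<lambda>u. f u * chi p u" and G="\<lambda>v. g v * chi p v", simplified])
  also have "\<dots> = crossM p A B * Phi p A f * Phi p B g"
    unfolding Phi_def by (simp add: mult.assoc)
  finally show ?thesis .
qed




definition colM :: "(nat \<Rightarrow> nat \<Rightarrow> 'a::field) \<Rightarrow> nat \<Rightarrow> nat multiset \<Rightarrow> 'a" where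
  "colM p a B = prod_mset (image_mset (\<lambda>b. if a < b then p b a else 1) B)"

lemma crossM_right_add_mset: "crossM p B (add_mset a A) = colM p a B * crossM p B A"
  unfolding crossM_def colM_def rowM_def by (simp add: prod_mset.distrib)

lemma crossM_right_empty[simp]: "crossM p B {#} = 1"
  unfolding crossM_def rowM_def by simp

lemma pwM_add_mset_left: "pwM p (add_mset a A) B = prod_mset (image_mset (p a) B) * pwM p A B"
  unfolding pwM_def by simp
lemma pwM_add_mset_right: "pwM p B (add_mset a A) = prod_mset (image_mset (\<lambda>b. p b a) B) * pwM p B A"
  unfolding pwM_def by (simp add: prod_mset.distrib)
lemma pwM_empty[simp]: "pwM p {#} B = 1" "pwM p B {#} = 1"
  unfolding pwM_def by simp_all

lemma rowM_swap:
  assumes "\<forall>b\<in>#B. a \<noteq> b \<and> p a b * p b a = 1"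
  shows "rowM p a B = colM p a B * prod_mset (image_mset (p a) B)"
proof -
  have "rowM p a B = prod_mset (image_mset (\<lambda>b. (if a < b then p b a else 1) * p a b) B)"
    unfolding rowM_def
  proof (rule arg_cong[where f=prod_mset], rule image_mset_cong)
    fix b assume "b \<in># B"
    then have "a \<noteq> b" "p a b * p b a = 1" using assms by auto
    then show "(if b < a then p a b else 1) = (if a < b then p b a else 1) * p a b"
      by (auto simp: mult.commute)
  qed
  then show ?thesis unfolding colM_def by (simp add: prod_mset.distrib)
qed

lemma crossM_swap:
  assumes "\<forall>a\<in>#A. \<forall>b\<in>#B. a \<noteq> b \<and> p a b * p b a = 1"
  shows "crossM p A B = crossM p B A * pwM p A B"
  using assms
proof (induction A)
  case empty then show ?case by simp
next
  case (add a A)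
  have r: "rowM p a B = colM p a B * prod_mset (image_mset (p a) B)"
    using add.prems by (intro rowM_swap) auto
  show ?case using add by (simp add: crossM_add_mset_left crossM_right_add_mset pwM_add_mset_left r)
qed

lemma pwM_swap:
  assumes "\<forall>a\<in>#A. \<forall>b\<in>#B. p a b * p b a = 1"
  shows "pwM p A B * pwM p B A = 1"
  using assms
proof (induction A)
  case empty then show ?case by simp
next
  case (add a A)
  have "prod_mset (image_mset (p a) B) * prod_mset (image_mset (\<lambda>b. p b a) B)
      = prod_mset (image_mset (\<lambda>b. p a b * p b a) B)" by (simp add: prod_mset.distrib)
  also have "\<dots> = prod_mset (image_mset (\<lambda>b. 1) B)"
    using add.prems by (intro arg_cong[where f=prod_mset] image_mset_cong) auto
  also have "\<dots> = 1" by simp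
  finally have e: "prod_mset (image_mset (p a) B) * prod_mset (image_mset (\<lambda>b. p b a) B) = 1" .
  have "pwM p (add_mset a A) B * pwM p B (add_mset a A)
     = (prod_mset (image_mset (p a) B) * prod_mset (image_mset (\<lambda>b. p b a) B)) * (pwM p A B * pwM p B A)"
    by (simp add: pwM_add_mset_left pwM_add_mset_right algebra_simps)
  then show ?case using e add by simp
qed

lemma pw_eq: "pw p u v = pwM p (mset u) (mset v)"
proof -
  have "\<And>i. (\<Prod>j<length v. p (u!i) (v!j)) = prod_mset (image_mset (p (u!i)) (mset v))"
    by (rule idx_prod)
  then have "pw p u v = (\<Prod>i<length u. prod_mset (image_mset (p (u!i)) (mset v)))"
    unfolding pw_def by simp
  also have "\<dots> = pwM p (mset u) (mset v)" unfolding pwM_def by (rule idx_prod)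
  finally show ?thesis .
qed

lemma Phi_single: "Phi p {#a#} f = f [a]"
proof -
  have "{u. mset u = {#a#}} = {[a]}" by (auto simp: mset_single_iff)
  then show ?thesis unfolding Phi_def by (simp add: chi_def)
qed

lemma crossM_nonzero:
  assumes "\<forall>a\<in>#A. \<forall>b\<in>#B. p a b \<noteq> 0"
  shows "crossM p A B \<noteq> 0"
  using assms unfolding crossM_def rowM_def by (auto simp: prod_mset_zero_iff split: if_splits)

lemma P_Cons:
  assumes "ys \<noteq> []"
  shows "(\<Prod>j<length (a#ys) - 1. (\<Prod>l\<in>{j+1..<length (a#ys)}. p ((a#ys)!j) ((a#ys)!l)) - 1)
       = ((\<Prod>l<length ys. p a (ys!l)) - 1) * (\<Prod>j<length ys - 1. (\<Prod>l\<in>{j+1..<length ys}. p (ys!j) (ys!l)) - 1)"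
proof -
  obtain n where n: "length ys = Suc n" using assms by (cases ys) auto
  have "(\<Prod>j<length (a#ys) - 1. (\<Prod>l\<in>{j+1..<length (a#ys)}. p ((a#ys)!j) ((a#ys)!l)) - 1)
      = (\<Prod>j<Suc n. (\<Prod>l\<in>{Suc j..<Suc (Suc n)}. p ((a#ys)!j) ((a#ys)!l)) - 1)"
    using n by simp
  also have "\<dots> = ((\<Prod>l\<in>{Suc 0..<Suc (Suc n)}. p a ((a#ys)!l)) - 1) *
       (\<Prod>j<n. (\<Prod>l\<in>{Suc (Suc j)..<Suc (Suc n)}. p (ys!j) ((a#ys)!l)) - 1)"
    unfolding prod.lessThan_Suc_shift by simp
  also have "\<dots> = ((\<Prod>l<Suc n. p a (ys!l)) - 1) *
       (\<Prod>j<n. (\<Prod>l\<in>{Suc j..<Suc n}. p (ys!j) (ys!l)) - 1)"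
    unfolding prod.shift_bounds_Suc_ivl by (simp add: atLeast0LessThan)
  finally show ?thesis using n by simp
qed

lemma Phi_RN:
  assumes "zs \<noteq> []" "distinct zs" "\<forall>a\<in>set zs. \<forall>b\<in>set zs. p a b \<noteq> 0"
    "\<forall>a\<in>set zs. \<forall>b\<in>set zs. a \<noteq> b \<longrightarrow> p a b * p b a = 1"
  shows "\<exists>D. D \<noteq> 0 \<and> Phi p (mset zs) (evM (RN zs)) =
           D * (\<Prod>j<length zs - 1. (\<Prod>l\<in>{j+1..<length zs}. p (zs!j) (zs!l)) - 1)"
  using assms
proof (induction zs rule: RN.induct)
  case 1 then show ?case by simp
next
  case (2 a) then show ?case by (simp add: Phi_single letter_def)
next
  case (3 a b zs)
  let ?ys = "b # zs"
  let ?Y = "mset ?ys"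
  define Q where "Q = (\<Prod>j<length ?ys - 1. (\<Prod>l\<in>{j+1..<length ?ys}. p (?ys!j) (?ys!l)) - 1)"
  define Pi where "Pi = (\<Prod>l<length ?ys. p a (?ys!l))"
  define c where "c = crossM p ?Y {#a#}"
  have "\<exists>D. D \<noteq> 0 \<and> Phi p ?Y (evM (RN ?ys)) = D * Q"
    unfolding Q_def by (rule "3.IH") (use "3.prems" in auto)
  then obtain D where D: "D \<noteq> 0" "Phi p ?Y (evM (RN ?ys)) = D * Q" by blast
  have sY: "supp_in (evM (RN ?ys)) ?Y" using supp_evM[of "RN ?ys"] by (simp add: leaves_RN)
  have e: "evM (RN (a # ?ys)) = (\<lambda>w. tmul (letter a) (evM (RN ?ys)) w - tmul (evM (RN ?ys)) (letter a) w)"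
    by simp
  have m1: "mset (a # ?ys) = {#a#} + ?Y" by simp
  have m2: "mset (a # ?ys) = ?Y + {#a#}" by simp
  have s1: "Phi p (mset (a # ?ys)) (evM (RN (a # ?ys)))
      = Phi p ({#a#} + ?Y) (tmul (letter a) (evM (RN ?ys))) - Phi p ({#a#} + ?Y) (tmul (evM (RN ?ys)) (letter a))"
    unfolding e Phi_diff by (simp only: m1)
  have s2: "Phi p ({#a#} + ?Y) (tmul (letter a) (evM (RN ?ys))) = crossM p {#a#} ?Y * Phi p ?Y (evM (RN ?ys))"
    unfolding Phi_tmul[OF supp_letter sY] by (simp add: Phi_single letter_def)
  have s3: "Phi p ({#a#} + ?Y) (tmul (evM (RN ?ys)) (letter a)) = c * Phi p ?Y (evM (RN ?ys))"
  proof -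
    have eq: "{#a#} + ?Y = ?Y + {#a#}" by (rule add.commute)
    show ?thesis unfolding eq Phi_tmul[OF sY supp_letter] c_def Phi_single by (simp add: letter_def)
  qed
  have s4: "crossM p {#a#} ?Y = c * pwM p {#a#} ?Y"
    unfolding c_def using "3.prems" by (intro crossM_swap) auto
  have s5: "pwM p {#a#} ?Y = Pi"
  proof -
    have "pwM p {#a#} ?Y = prod_mset (image_mset (p a) ?Y)" unfolding pwM_def by simp
    also have "\<dots> = Pi" unfolding Pi_def by (rule idx_prod[symmetric])
    finally show ?thesis .
  qed
  have fin: "Phi p (mset (a # ?ys)) (evM (RN (a # ?ys))) = (c * D) * ((Pi - 1) * Q)"
    unfolding s1 s2 s3 s4 s5 D(2) by (simp add: algebra_simps)
  have "c \<noteq> 0" unfolding c_def using "3.prems" by (intro crossM_nonzero) auto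
  moreover have "(\<Prod>j<length (a#?ys) - 1. (\<Prod>l\<in>{j+1..<length (a#?ys)}. p ((a#?ys)!j) ((a#?ys)!l)) - 1)
      = (Pi - 1) * Q" unfolding Pi_def Q_def by (rule P_Cons) simp
  ultimately show ?case using D(1) fin by (intro exI[of _ "c * D"]) simp
qed

lemma alg_sg:
  fixes a b c x y P R :: "'a::field"
  assumes "b * a = 1"
  shows "b * (c * a * (x * P) * (y * R)) - a * (c * (y * R) * (x * P)) = (-(x*y)) * (c * a * P * R - c * R * P)"
proof -
  have "b * (c * a * (x * P) * (y * R)) = (b * a) * (c * x * y * P * R)" by (simp add: algebra_simps)
  then show ?thesis using assms by (simp add: algebra_simps)
qed

fun sg :: "btree \<Rightarrow> int" where
  "sg (Leaf i) = 1"
| "sg (Node s t) = - sg s * sg t"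

lemma Phi_evL:
  assumes "distinct (leaves t)" "\<forall>a\<in>set (leaves t). \<forall>b\<in>set (leaves t). p a b * p b a = 1"
  shows "Phi p (mset (leaves t)) (evL p t) = of_int (sg t) * Phi p (mset (leaves t)) (evM t)"
  using assms
proof (induction t)
  case (Leaf i) then show ?case by simp
next
  case (Node s t)
  let ?S = "mset (leaves s)" and ?T = "mset (leaves t)"
  have IHs: "Phi p ?S (evL p s) = of_int (sg s) * Phi p ?S (evM s)" using Node by auto
  have IHt: "Phi p ?T (evL p t) = of_int (sg t) * Phi p ?T (evM t)" using Node by auto
  have dis: "\<forall>a\<in>#?S. \<forall>b\<in>#?T. a \<noteq> b \<and> p a b * p b a = 1" using Node.prems by auto
  have cs: "crossM p ?S ?T = crossM p ?T ?S * pwM p ?S ?T" using crossM_swap[OF dis] .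
  have ps0: "pwM p ?S ?T * pwM p ?T ?S = 1" using dis by (intro pwM_swap) auto
  then have ps: "pwM p ?T ?S * pwM p ?S ?T = 1" by (simp add: mult.commute)
  have L: "Phi p (mset (leaves (Node s t))) (evL p (Node s t))
      = pwM p ?T ?S * (crossM p ?S ?T * Phi p ?S (evL p s) * Phi p ?T (evL p t))
        - pwM p ?S ?T * (crossM p ?T ?S * Phi p ?T (evL p t) * Phi p ?S (evL p s))"
  proof -
    have "Phi p (mset (leaves (Node s t))) (evL p (Node s t))
      = pwM p ?T ?S * Phi p (?S + ?T) (tmul (evL p s) (evL p t)) - pwM p ?S ?T * Phi p (?T + ?S) (tmul (evL p t) (evL p s))"
      by (simp add: Phi_lin pw_eq add.commute)
    then show ?thesis by (simp add: Phi_tmul supp_evL)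
  qed
  have M: "Phi p (mset (leaves (Node s t))) (evM (Node s t))
      = crossM p ?S ?T * Phi p ?S (evM s) * Phi p ?T (evM t) - crossM p ?T ?S * Phi p ?T (evM t) * Phi p ?S (evM s)"
  proof -
    have "Phi p (mset (leaves (Node s t))) (evM (Node s t))
      = Phi p (?S + ?T) (tmul (evM s) (evM t)) - Phi p (?T + ?S) (tmul (evM t) (evM s))"
      by (simp add: Phi_diff add.commute)
    then show ?thesis by (simp add: Phi_tmul supp_evM)
  qed
  show ?case unfolding L M IHs IHt cs
  proof -
    let ?c = "crossM p ?T ?S" and ?a = "pwM p ?S ?T" and ?b = "pwM p ?T ?S"
    have "?b * ?a = 1" by (rule ps)
    then show "?b * (?c * ?a * (of_int (sg s) * Phi p ?S (evM s)) * (of_int (sg t) * Phi p ?T (evM t))) -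
      ?a * (?c * (of_int (sg t) * Phi p ?T (evM t)) * (of_int (sg s) * Phi p ?S (evM s))) =
      of_int (sg (Node s t)) * (?c * ?a * Phi p ?S (evM s) * Phi p ?T (evM t) - ?c * Phi p ?T (evM t) * Phi p ?S (evM s))"
      using alg_sg[OF \<open>?b * ?a = 1\<close>] by simp
  qed
qed




lemma coef_pairs:
  "sym_coef p w \<tau> = (\<Prod>(l,k)\<in>(SIGMA l:{..<length w}. {..<l}). if \<tau> l < \<tau> k then p (w!\<tau> l) (w!\<tau> k) else 1)"
  unfolding sym_coef_def by (subst prod.Sigma) auto

lemma cocycle:
  fixes u :: "nat list"
  assumes \<sigma>: "\<sigma> permutes {..<length u}" and s: "s permutes {..<length u}"
    and H: "\<forall>a\<in>set u. \<forall>b\<in>set u. p a b * p b a = 1"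
  shows "sym_coef p u (\<sigma> \<circ> s) = sym_coef p u \<sigma> * sym_coef p (permute_list \<sigma> u) s"
proof -
  define m where "m = length u"
  define v where "v = permute_list \<sigma> u"
  define Q where "Q = (SIGMA l:{..<m}. {..<l})"
  have lv: "length v = m" unfolding v_def m_def by simp
  have vn: "v!x = u!(\<sigma> x)" if "x < m" for x
    unfolding v_def using permute_list_nth[OF \<sigma>] that m_def by simp
  have sm: "s x < m" if "x < m" for x using permutes_in_image[OF s] that m_def by simp
  have \<sigma>m: "\<sigma> x < m" if "x < m" for x using permutes_in_image[OF \<sigma>] that m_def by simp
  have sinj: "x = y" if "s x = s y" for x y using permutes_inj[OF s] that by (meson injD)
  have \<sigma>inj: "x = y" if "\<sigma> x = \<sigma> y" for x y using permutes_inj[OF \<sigma>] that by (meson injD)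
  have Hv: "p (v!x) (v!y) * p (v!y) (v!x) = 1" if "x < m" "y < m" for x y
  proof -
    have sv: "set v = set u" unfolding v_def by (metis mset_permute_list[OF \<sigma>] set_mset_mset)
    have "v!x \<in> set u" "v!y \<in> set u" using that lv sv by (metis nth_mem)+
    then show ?thesis using H by blast
  qed
  define HH where "HH = (\<lambda>(y,x). if \<sigma> y < \<sigma> x then p (v!y) (v!x) else 1)"
  define \<phi> where "\<phi> = (\<lambda>(l::nat,k::nat). (max (s l) (s k), min (s l) (s k)))"
  have L: "sym_coef p u (\<sigma> \<circ> s) = (\<Prod>(l,k)\<in>Q. if \<sigma> (s l) < \<sigma> (s k) then p (v!s l) (v!s k) else 1)"
    unfolding coef_pairs Q_def m_def[symmetric]
    by (rule prod.cong[OF refl]) (auto simp: vn sm)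
  have R1: "sym_coef p u \<sigma> = prod HH Q"
    unfolding coef_pairs Q_def m_def[symmetric] HH_def
    by (rule prod.cong[OF refl]) (auto simp: vn)
  have R2: "sym_coef p v s = (\<Prod>(l,k)\<in>Q. if s l < s k then p (v!s l) (v!s k) else 1)"
    unfolding coef_pairs Q_def lv ..
  have finQ: "finite Q" unfolding Q_def by auto
  have imQ: "\<phi> ` Q \<subseteq> Q"
  proof
    fix z assume "z \<in> \<phi> ` Q"
    then obtain l k where lk: "(l,k) \<in> Q" "z = \<phi> (l,k)" by auto
    then have kl: "k < l" "l < m" unfolding Q_def by auto
    have "s l \<noteq> s k" using sinj kl by (metis less_irrefl)
    moreover have "s l < m" "s k < m" using sm kl by simp_all
    ultimately have "s l \<noteq> s k" "s l < m" "s k < m" by simp_all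
    then show "z \<in> Q" using lk unfolding Q_def \<phi>_def by (auto simp: max_def min_def)
  qed
  have injQ: "inj_on \<phi> Q"
  proof (rule inj_onI)
    fix x y assume "x \<in> Q" "y \<in> Q" "\<phi> x = \<phi> y"
    then obtain l k l' k' where "x = (l,k)" "y = (l',k')" "k < l" "k' < l'"
      "max (s l) (s k) = max (s l') (s k')" "min (s l) (s k) = min (s l') (s k')"
      unfolding Q_def \<phi>_def by auto
    then have "s l = s l' \<and> s k = s k' \<or> s l = s k' \<and> s k = s l'"
      by (auto simp: max_def min_def split: if_splits)
    then have "l = l' \<and> k = k' \<or> l = k' \<and> k = l'" using sinj by blast
    then show "x = y" using \<open>x = (l,k)\<close> \<open>y = (l',k')\<close> \<open>k < l\<close> \<open>k' < l'\<close> by auto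
  qed
  have bij: "bij_betw \<phi> Q Q" unfolding bij_betw_def using endo_inj_surj[OF finQ imQ injQ] injQ by simp
  have R1': "prod HH Q = (\<Prod>x\<in>Q. HH (\<phi> x))" by (rule prod.reindex_bij_betw[OF bij, symmetric])
  have pw: "(if \<sigma> (s l) < \<sigma> (s k) then p (v!s l) (v!s k) else 1)
      = HH (\<phi> (l,k)) * (if s l < s k then p (v!s l) (v!s k) else 1)" if "(l,k) \<in> Q" for l k
  proof -
    from that have kl: "k < l" "l < m" unfolding Q_def by auto
    have ne: "s l \<noteq> s k" using sinj kl by (metis less_irrefl)
    have a: "s l < m" and b: "s k < m" using sm kl by simp_all
    show ?thesis
    proof (cases "s k < s l")
      case True
      then show ?thesis unfolding \<phi>_def HH_def by (simp add: max_def min_def)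
    next
      case False
      then have lt: "s l < s k" using ne by simp
      have ph: "\<phi> (l,k) = (s k, s l)" unfolding \<phi>_def using lt by (simp add: max_def min_def)
      show ?thesis
      proof (cases "\<sigma> (s k) < \<sigma> (s l)")
        case True
        then show ?thesis unfolding ph HH_def using lt Hv[OF b a] by simp
      next
        case False
        then have "\<sigma> (s l) < \<sigma> (s k)" using ne \<sigma>inj by (metis linorder_neqE_nat)
        then show ?thesis unfolding ph HH_def using lt False by simp
      qed
    qed
  qed
  have "sym_coef p u (\<sigma> \<circ> s) = (\<Prod>x\<in>Q. HH (\<phi> x) * (case x of (l,k) \<Rightarrow> if s l < s k then p (v!s l) (v!s k) else 1))"
    unfolding L by (rule prod.cong[OF refl]) (auto simp: pw)
  also have "\<dots> = sym_coef p u \<sigma> * sym_coef p v s"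
    unfolding R1 R1' R2 prod.distrib ..
  finally show ?thesis unfolding v_def .
qed




lemma strict_nth_iff:
  assumes "sorted_wrt (<) (xs :: nat list)" "i < length xs" "j < length xs"
  shows "xs!i < xs!j \<longleftrightarrow> i < j"
proof -
  have "i < j \<Longrightarrow> xs!i < xs!j" using assms sorted_wrt_nth_less by blast
  moreover have "j < i \<Longrightarrow> xs!j < xs!i" using assms sorted_wrt_nth_less by blast
  ultimately show ?thesis by (metis less_asym linorder_neqE_nat less_irrefl)
qed

lemma coef_sorted:
  assumes srt: "sorted_wrt (<) w0" and r: "r permutes {..<length w0}"
    and H: "\<forall>a\<in>set w0. \<forall>b\<in>set w0. p a b * p b a = 1"
  shows "sym_coef p w0 r * chi p (permute_list r w0) = 1"
proof -
  define m where "m = length w0"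
  define v where "v = permute_list r w0"
  have vn: "v!x = w0!(r x)" if "x < m" for x
    unfolding v_def using permute_list_nth[OF r] that m_def by simp
  have rm: "r x < m" if "x < m" for x using permutes_in_image[OF r] that m_def by simp
  have pt: "(if r l < r k then p (w0!r l) (w0!r k) else 1) * (if v!l < v!k then p (v!k) (v!l) else 1) = 1"
    if "k < l" "l < m" for k l
  proof -
    have km: "k < m" using that by simp
    have iff: "w0!r l < w0!r k \<longleftrightarrow> r l < r k"
      using strict_nth_iff[OF srt] rm that km m_def by simp
    have "p (w0!r l) (w0!r k) * p (w0!r k) (w0!r l) = 1"
      using H rm that km m_def by (metis nth_mem)
    then show ?thesis unfolding vn[OF that(2)] vn[OF km] iff by simp
  qed
  have "sym_coef p w0 r * chi p v = (\<Prod>l<m. \<Prod>k<l. (if r l < r k then p (w0!r l) (w0!r k) else 1) * (if v!l < v!k then p (v!k) (v!l) else 1))"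
    unfolding sym_coef_def chi_def prod.distrib m_def v_def by simp
  also have "\<dots> = (\<Prod>l<m. \<Prod>k<l. (1::'a))"
    by (intro prod.cong refl) (simp add: pt)
  finally show ?thesis unfolding v_def by simp
qed

lemma chi_nonzero:
  assumes "\<forall>a\<in>set u. \<forall>b\<in>set u. p a b \<noteq> 0"
  shows "chi p u \<noteq> 0"
  unfolding chi_def using assms by (auto simp: prod_zero_iff)

lemma coef_chi:
  assumes d: "distinct u" and \<sigma>: "\<sigma> permutes {..<length u}"
    and H: "\<forall>a\<in>set u. \<forall>b\<in>set u. p a b * p b a = 1"
  shows "sym_coef p u \<sigma> * chi p (permute_list \<sigma> u) = chi p u"
proof -
  define w0 where "w0 = sort u"
  have srt: "sorted_wrt (<) w0" unfolding w0_def strict_sorted_iff using d by simp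
  have mw: "mset u = mset w0" unfolding w0_def by simp
  have lw: "length w0 = length u" unfolding w0_def by simp
  have sw: "set w0 = set u" unfolding w0_def by simp
  obtain r where r: "r permutes {..<length w0}" "permute_list r w0 = u"
    using mset_eq_permutation[OF mw] by blast
  have H0: "\<forall>a\<in>set w0. \<forall>b\<in>set w0. p a b * p b a = 1" using H sw by simp
  have \<sigma>0: "\<sigma> permutes {..<length w0}" using \<sigma> lw by simp
  have c: "sym_coef p w0 (r \<circ> \<sigma>) = sym_coef p w0 r * sym_coef p u \<sigma>"
    using cocycle[OF r(1) \<sigma>0 H0] r(2) by simp
  have e1: "sym_coef p w0 (r \<circ> \<sigma>) * chi p (permute_list \<sigma> u) = 1"
    using coef_sorted[OF srt permutes_compose[OF \<sigma>0 r(1)] H0]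
    permute_list_compose[OF \<sigma>0, of r] r(2) by simp
  have e2: "sym_coef p w0 r * chi p u = 1" using coef_sorted[OF srt r(1) H0] r(2) by simp
  have "sym_coef p w0 r \<noteq> 0" using e2 by auto
  moreover have "sym_coef p w0 r * (sym_coef p u \<sigma> * chi p (permute_list \<sigma> u)) = sym_coef p w0 r * chi p u"
    using e1 e2 c by (simp add: mult.assoc)
  ultimately show ?thesis by simp
qed

definition Sg :: "nat \<Rightarrow> nat list \<Rightarrow> nat list \<Rightarrow> (nat \<Rightarrow> nat) set" where
  "Sg m u w = {\<sigma>. \<sigma> permutes {..<m} \<and> perm_word u \<sigma> = w}"

lemma perm_word_eq: "perm_word u \<sigma> = permute_list \<sigma> u"
  by (simp add: perm_word_def permute_list_def)

lemma finite_Sg: "finite (Sg m u w)"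
proof -
  have "Sg m u w \<subseteq> {\<sigma>. \<sigma> permutes {..<m}}" by (auto simp: Sg_def)
  then show ?thesis using finite_permutations[of "{..<m}"] finite_subset by auto
qed

lemma symm_restrict:
  assumes "length w = m" "set w \<subseteq> {..<n}"
  shows "symm n p m f w = (\<Sum>u\<in>{u. mset u = mset w}. f u * (\<Sum>\<sigma>\<in>Sg m u w. sym_coef p u \<sigma>))"
proof -
  let ?U = "{u. length u = m \<and> set u \<subseteq> {..<n}}"
  have sub: "{u. mset u = mset w} \<subseteq> ?U"
  proof
    fix u assume "u \<in> {u. mset u = mset w}"
    then have "mset u = mset w" by simp
    then have "length u = length w" "set u = set w" by (metis size_mset, metis set_mset_mset)
    then show "u \<in> ?U" using assms by simp
  qed
  have finU: "finite ?U" using finite_lists_length_eq[of "{..<n}" m] by (simp add: conj_commute)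
  have z: "\<forall>u\<in>?U - {u. mset u = mset w}. f u * (\<Sum>\<sigma>\<in>Sg m u w. sym_coef p u \<sigma>) = 0"
  proof
    fix u assume u: "u \<in> ?U - {u. mset u = mset w}"
    have "Sg m u w = {}"
    proof (rule ccontr)
      assume "Sg m u w \<noteq> {}"
      then obtain \<sigma> where "\<sigma> permutes {..<m}" "permute_list \<sigma> u = w" unfolding Sg_def perm_word_eq by auto
      then have "mset w = mset u" using u mset_permute_list[of \<sigma> u] by auto
      then show False using u by auto
    qed
    then show "f u * (\<Sum>\<sigma>\<in>Sg m u w. sym_coef p u \<sigma>) = 0" by simp
  qed
  show ?thesis unfolding symm_def Sg_def[symmetric]
    by (rule sum.mono_neutral_right[OF finU sub z])
qed

lemma Sg_distinct:
  assumes d: "distinct w" and mu: "mset u = mset w" and lw: "length w = m"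
  obtains \<sigma>0 where "Sg m u w = {\<sigma>0}" "\<sigma>0 permutes {..<length u}" "permute_list \<sigma>0 u = w"
proof -
  have lu: "length u = m" using mu lw by (metis size_mset)
  have du: "distinct u" using d mu mset_eq_imp_distinct_iff by blast
  obtain \<sigma>0 where s0: "\<sigma>0 permutes {..<length u}" "permute_list \<sigma>0 u = w"
  proof -
    have "mset w = mset u" using mu by simp
    from mset_eq_permutation[OF this] show ?thesis using that by blast
  qed
  have "Sg m u w = {\<sigma>0}"
  proof
    show "{\<sigma>0} \<subseteq> Sg m u w" using s0 lu unfolding Sg_def perm_word_eq by auto
    show "Sg m u w \<subseteq> {\<sigma>0}"
    proof
      fix \<sigma> assume "\<sigma> \<in> Sg m u w"
      then have s: "\<sigma> permutes {..<length u}" "permute_list \<sigma> u = w" unfolding Sg_def perm_word_eq lu by auto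
      have "\<sigma> x = \<sigma>0 x" for x
      proof (cases "x < length u")
        case True
        have "u ! \<sigma> x = u ! \<sigma>0 x"
          using permute_list_nth[OF s(1) True] permute_list_nth[OF s0(1) True] s(2) s0(2) by simp
        moreover have "\<sigma> x < length u" "\<sigma>0 x < length u"
          using permutes_in_image[OF s(1)] permutes_in_image[OF s0(1)] True by auto
        ultimately show ?thesis using nth_eq_iff_index_eq[OF du] by simp
      next
        case False
        then show ?thesis using permutes_not_in[OF s(1)] permutes_not_in[OF s0(1)] by simp
      qed
      then show "\<sigma> \<in> {\<sigma>0}" by auto
    qed
  qed
  then show ?thesis using that s0 by blast
qed

lemma symm_distinct:
  assumes d: "distinct w" and lw: "length w = m" and sw: "set w \<subseteq> {..<n}"
    and H: "\<forall>a<n. \<forall>b<n. p a b * p b a = 1"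
  shows "symm n p m f w = Phi p (mset w) f / chi p w"
proof -
  have nz: "\<forall>a\<in>set w. \<forall>b\<in>set w. p a b \<noteq> 0"
  proof (intro ballI)
    fix a b assume "a \<in> set w" "b \<in> set w"
    then have "a < n" "b < n" using sw by auto
    then have "p a b * p b a = 1" using H by blast
    then show "p a b \<noteq> 0" by auto
  qed
  have cw: "chi p w \<noteq> 0" by (rule chi_nonzero[OF nz])
  have "symm n p m f w = (\<Sum>u\<in>{u. mset u = mset w}. f u * chi p u / chi p w)"
    unfolding symm_restrict[OF lw sw]
  proof (rule sum.cong[OF refl])
    fix u assume "u \<in> {u. mset u = mset w}"
    then have mu: "mset u = mset w" by simp
    obtain \<sigma>0 where s0: "Sg m u w = {\<sigma>0}" "\<sigma>0 permutes {..<length u}" "permute_list \<sigma>0 u = w"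
      using Sg_distinct[OF d mu lw] by metis
    have du: "distinct u" using d mu mset_eq_imp_distinct_iff by blast
    have su: "set u = set w" using mu by (metis set_mset_mset)
    have Hu: "\<forall>a\<in>set u. \<forall>b\<in>set u. p a b * p b a = 1" using H sw unfolding su by blast
    have "sym_coef p u \<sigma>0 * chi p w = chi p u" using coef_chi[OF du s0(2) Hu] s0(3) by simp
    then have "sym_coef p u \<sigma>0 = chi p u / chi p w" using cw by (simp add: field_simps)
    then show "f u * (\<Sum>\<sigma>\<in>Sg m u w. sym_coef p u \<sigma>) = f u * chi p u / chi p w" using s0(1) by simp
  qed
  also have "\<dots> = Phi p (mset w) f / chi p w" unfolding Phi_def by (simp add: sum_divide_distrib)
  finally show ?thesis .
qed




lemma sorted_adj:
  assumes "sorted (xs::nat list)" "\<not> distinct xs"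
  shows "\<exists>i. Suc i < length xs \<and> xs!i = xs!Suc i"
  using assms
proof (induction xs)
  case Nil then show ?case by simp
next
  case (Cons a ys)
  show ?case
  proof (cases ys)
    case Nil then show ?thesis using Cons by simp
  next
    case (Cons b zs)
    show ?thesis
    proof (cases "a = b")
      case True then show ?thesis using Cons by (intro exI[of _ 0]) simp
    next
      case False
      have "a \<le> b" using Cons.prems(1) Cons by simp
      then have ab: "a < b" using False by simp
      have "\<forall>y\<in>set ys. b \<le> y" using Cons.prems(1) Cons by simp
      then have "a \<notin> set ys" using ab by fastforce
      then have "\<not> distinct ys" using Cons.prems(2) by simp
      moreover have "sorted ys" using Cons.prems(1) by simp
      ultimately obtain i where "Suc i < length ys" "ys!i = ys!Suc i" using Cons.IH by blast
      then show ?thesis by (intro exI[of _ "Suc i"]) simp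
    qed
  qed
qed

lemma coef_nonzero:
  assumes "\<forall>a\<in>set u. \<forall>b\<in>set u. p a b \<noteq> 0" "\<sigma> permutes {..<length u}"
  shows "sym_coef p u \<sigma> \<noteq> 0"
  unfolding sym_coef_def using assms permutes_in_image[OF assms(2)]
  by (auto simp: prod_zero_iff split: if_splits)

lemma coef_transp:
  assumes x: "Suc x < length v" and eq: "v!x = v!Suc x"
  shows "sym_coef p v (Transposition.transpose x (Suc x)) = p (v!x) (v!x)"
proof -
  let ?t = "Transposition.transpose x (Suc x)"
  let ?m = "length v"
  have pt: "(if ?t l < ?t k then p (v!?t l) (v!?t k) else 1) = (if l = Suc x then (if k = x then p (v!x) (v!x) else 1) else 1)"
    if "k < l" for k l
    using that eq by (auto simp: transpose_def)
  have "sym_coef p v ?t = (\<Prod>l<?m. \<Prod>k<l. (if l = Suc x then (if k = x then p (v!x) (v!x) else 1) else 1))"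
    unfolding sym_coef_def by (intro prod.cong refl) (simp add: pt)
  also have "\<dots> = (\<Prod>l<?m. (if l = Suc x then p (v!x) (v!x) else 1))"
    by (intro prod.cong refl) auto
  also have "\<dots> = p (v!x) (v!x)" using x by (simp add: prod.delta)
  finally show ?thesis .
qed

lemma K_repeated:
  assumes nd: "\<not> distinct u" and lu: "length u = m"
    and H: "\<forall>a\<in>set u. \<forall>b\<in>set u. p a b * p b a = 1"
    and D: "\<forall>a\<in>set u. p a a = -1"
  shows "(\<Sum>\<sigma>\<in>Sg m u w. sym_coef p u \<sigma>) = (0::'a::field_char_0)"
proof (cases "Sg m u w = {}")
  case True then show ?thesis by simp
next
  case False
  then obtain \<sigma>1 where s1: "\<sigma>1 permutes {..<m}" "permute_list \<sigma>1 u = w"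
    unfolding Sg_def perm_word_eq by auto
  have mw: "mset w = mset u" using s1 lu mset_permute_list[of \<sigma>1 u] by simp
  have lw: "length w = m" using mw lu by (metis size_mset)
  have sw: "set w = set u" using mw by (metis set_mset_mset)
  have nz: "\<forall>a\<in>set u. \<forall>b\<in>set u. p a b \<noteq> 0" using H by (metis mult_zero_left zero_neq_one)
  define w2 where "w2 = sort w"
  have mw2: "mset w2 = mset w" unfolding w2_def by simp
  obtain r where r: "r permutes {..<length w}" "permute_list r w = w2"
    using mset_eq_permutation[OF mw2] by blast
  have rm: "r permutes {..<m}" using r lw by simp
  have A: "(\<Sum>\<sigma>\<in>Sg m u w. sym_coef p w r * sym_coef p u \<sigma>) = (\<Sum>\<sigma>\<in>Sg m u w2. sym_coef p u \<sigma>)"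
  proof (rule sum.reindex_bij_witness[where j = "\<lambda>\<sigma>. \<sigma> \<circ> r" and i = "\<lambda>\<tau>. \<tau> \<circ> inv r"])
    fix \<sigma> assume "\<sigma> \<in> Sg m u w"
    then have s: "\<sigma> permutes {..<m}" "permute_list \<sigma> u = w" unfolding Sg_def perm_word_eq by auto
    show "\<sigma> \<circ> r \<circ> inv r = \<sigma>" using permutes_inv_o(1)[OF rm] by (simp add: comp_assoc)
    have "permute_list (\<sigma> \<circ> r) u = w2" using permute_list_compose[of r u \<sigma>] rm lu s r(2) by simp
    then show "\<sigma> \<circ> r \<in> Sg m u w2" unfolding Sg_def perm_word_eq using permutes_compose[OF rm s(1)] by simp
    have "sym_coef p u (\<sigma> \<circ> r) = sym_coef p u \<sigma> * sym_coef p w r"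
      using cocycle[of \<sigma> u r p] s lu rm H by simp
    then show "sym_coef p u (\<sigma> \<circ> r) = sym_coef p w r * sym_coef p u \<sigma>" by (simp add: mult.commute)
  next
    fix \<tau> assume "\<tau> \<in> Sg m u w2"
    then have t: "\<tau> permutes {..<m}" "permute_list \<tau> u = w2" unfolding Sg_def perm_word_eq by auto
    show "\<tau> \<circ> inv r \<circ> r = \<tau>" using permutes_inv_o(2)[OF rm] by (simp add: comp_assoc)
    have ir: "inv r permutes {..<m}" using permutes_inv[OF rm] .
    have "permute_list (\<tau> \<circ> inv r) u = permute_list (inv r) w2" using permute_list_compose[of "inv r" u \<tau>] ir lu t by simp
    also have "\<dots> = permute_list (r \<circ> inv r) w" using permute_list_compose[of "inv r" w r] ir lw r(2) by simp
    also have "\<dots> = w" using permutes_inv_o(1)[OF rm] by (simp add: permute_list_id)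
    finally show "\<tau> \<circ> inv r \<in> Sg m u w" unfolding Sg_def perm_word_eq using permutes_compose[OF ir t(1)] by simp
  qed
  have B: "(\<Sum>\<sigma>\<in>Sg m u w2. sym_coef p u \<sigma>) = 0"
  proof -
    have srt: "sorted w2" unfolding w2_def by simp
    have "\<not> distinct w2" using nd mw mw2 mset_eq_imp_distinct_iff by metis
    then obtain x where x: "Suc x < length w2" "w2!x = w2!Suc x" using sorted_adj[OF srt] by blast
    have lw2: "length w2 = m" using mw2 lw by (metis size_mset)
    let ?t = "Transposition.transpose x (Suc x)"
    have tm: "?t permutes {..<m}" using x lw2 by (intro permutes_swap_id) auto
    have tw: "permute_list ?t w2 = w2"
    proof (rule nth_equalityI)
      show "length (permute_list ?t w2) = length w2" by simp
      fix i assume "i < length (permute_list ?t w2)"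
      then have i: "i < length w2" by simp
      show "permute_list ?t w2 ! i = w2 ! i"
        using permute_list_nth[of ?t w2 i] tm lw2 i x by (auto simp: transpose_def)
    qed
    have ct: "sym_coef p w2 ?t = -1"
    proof -
      have "w2!x \<in> set u" using x mw2 sw by (metis nth_mem set_mset_mset sw)
      then show ?thesis using coef_transp[OF x(1) x(2), of p] D by simp
    qed
    have "(\<Sum>\<sigma>\<in>Sg m u w2. sym_coef p w2 ?t * sym_coef p u \<sigma>) = (\<Sum>\<sigma>\<in>Sg m u w2. sym_coef p u \<sigma>)"
    proof (rule sum.reindex_bij_witness[where j = "\<lambda>\<sigma>. \<sigma> \<circ> ?t" and i = "\<lambda>\<tau>. \<tau> \<circ> ?t"])
      fix \<sigma> assume "\<sigma> \<in> Sg m u w2"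
      then have s: "\<sigma> permutes {..<m}" "permute_list \<sigma> u = w2" unfolding Sg_def perm_word_eq by auto
      show "\<sigma> \<circ> ?t \<circ> ?t = \<sigma>" by (simp add: comp_assoc transpose_comp_involutory)
      have "permute_list (\<sigma> \<circ> ?t) u = w2" using permute_list_compose[of ?t u \<sigma>] tm lu s tw by simp
      then show "\<sigma> \<circ> ?t \<in> Sg m u w2" unfolding Sg_def perm_word_eq using permutes_compose[OF tm s(1)] by simp
      show "\<sigma> \<circ> ?t \<in> Sg m u w2" by fact
      show "\<sigma> \<circ> ?t \<circ> ?t = \<sigma>" by (simp add: comp_assoc transpose_comp_involutory)
      have "sym_coef p u (\<sigma> \<circ> ?t) = sym_coef p u \<sigma> * sym_coef p w2 ?t"
        using cocycle[of \<sigma> u ?t p] s lu tm H by simp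
      then show "sym_coef p u (\<sigma> \<circ> ?t) = sym_coef p w2 ?t * sym_coef p u \<sigma>" by (simp add: mult.commute)
    qed
    then have "- (\<Sum>\<sigma>\<in>Sg m u w2. sym_coef p u \<sigma>) = (\<Sum>\<sigma>\<in>Sg m u w2. sym_coef p u \<sigma>)"
      unfolding ct by (simp add: sum_negf)
    then show ?thesis by simp
  qed
  have "sym_coef p w r \<noteq> 0" using coef_nonzero[of w p r] nz sw r(1) by simp
  moreover have "sym_coef p w r * (\<Sum>\<sigma>\<in>Sg m u w. sym_coef p u \<sigma>) = 0"
    using A B by (simp add: sum_distrib_left)
  ultimately show ?thesis by simp
qed




lemma perms2:
  assumes "\<sigma> permutes {..<2::nat}"
  shows "\<sigma> = id \<or> \<sigma> = Transposition.transpose 0 1"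
proof -
  have out: "\<sigma> x = x" if "x \<ge> 2" for x using permutes_not_in[OF assms] that by simp
  have in0: "\<sigma> 0 < 2" "\<sigma> 1 < 2" using permutes_in_image[OF assms] by auto
  have ne: "\<sigma> 0 \<noteq> \<sigma> 1"
  proof
    assume "\<sigma> 0 = \<sigma> 1"
    then have "(0::nat) = 1" using injD[OF permutes_inj[OF assms]] by blast
    then show False by simp
  qed
  show ?thesis
  proof (cases "\<sigma> 0 = 0")
    case True
    then have "\<sigma> 1 = 1" using in0 ne by auto
    have "\<sigma> x = id x" for x
    proof -
      consider "x = 0" | "x = 1" | "x \<ge> 2" by linarith
      then show ?thesis using True \<open>\<sigma> 1 = 1\<close> out by cases auto
    qed
    then have "\<sigma> = id" by blast
    then show ?thesis by simp
  next
    case False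
    then have "\<sigma> 0 = 1" "\<sigma> 1 = 0" using in0 ne by auto
    have "\<sigma> x = Transposition.transpose 0 1 x" for x
    proof -
      consider "x = 0" | "x = 1" | "x \<ge> 2" by linarith
      then show ?thesis using \<open>\<sigma> 0 = 1\<close> \<open>\<sigma> 1 = 0\<close> out by cases (auto simp: transpose_def)
    qed
    then have "\<sigma> = Transposition.transpose 0 1" by blast
    then show ?thesis by simp
  qed
qed

lemma Sg2: "Sg 2 u w = {\<sigma>\<in>{id, Transposition.transpose 0 1}. permute_list \<sigma> u = w}"
proof -
  have "Transposition.transpose 0 1 permutes {..<2::nat}" by (intro permutes_swap_id) auto
  moreover have "id permutes {..<2::nat}" by (rule permutes_id)
  ultimately show ?thesis unfolding Sg_def perm_word_eq using perms2 by blast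
qed

lemma coef2: "sym_coef p [a,b] \<sigma> = (if \<sigma> 1 < \<sigma> 0 then p ([a,b]!\<sigma> 1) ([a,b]!\<sigma> 0) else 1)"
  unfolding sym_coef_def by (simp add: numeral_2_eq_2 lessThan_Suc)

lemma pl2: "permute_list \<sigma> [a,b] = [[a,b]!\<sigma> 0, [a,b]!\<sigma> 1]"
  unfolding permute_list_def by (simp add: numeral_2_eq_2 upt_rec)

lemma mset2: "mset u = mset [a,b] \<longleftrightarrow> u = [a,b] \<or> u = [b,a]"
proof
  assume m: "mset u = mset [a,b]"
  then have "length u = 2" using mset_eq_length by fastforce
  then obtain x y where u: "u = [x,y]"
    by (auto simp: length_Suc_conv numeral_2_eq_2)
  then have "{#x,y#} = {#a,b#}" using m by simp
  then show "u = [a,b] \<or> u = [b,a]" using u by (auto simp: add_eq_conv_ex)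
qed auto

lemma pl2t: "permute_list (Transposition.transpose 0 1) [a,b] = [b,a]"
  by (simp add: pl2 transpose_def)

lemma coef2t: "sym_coef p [a,b] (Transposition.transpose 0 1) = p a b"
  by (simp add: coef2 transpose_def)

lemma coef2id: "sym_coef p [a,b] id = 1"
  by (simp add: coef2)

lemma tid: "Transposition.transpose 0 (1::nat) \<noteq> id"
proof
  assume "Transposition.transpose 0 (1::nat) = id"
  then have "Transposition.transpose 0 (1::nat) 0 = id 0" by simp
  then show False by (simp add: transpose_def)
qed

lemma Sg2': "Sg 2 u w = (if u = w then {id} else {}) \<union> (if permute_list (Transposition.transpose 0 1) u = w then {Transposition.transpose 0 1} else {})"
  unfolding Sg2 by (auto simp: permute_list_id)

lemma symm2_ij:
  assumes "i \<noteq> j" "i < n" "j < n"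
  shows "symm n p 2 f [i,j] = f [i,j] + f [j,i] * p j i"
proof -
  have U: "{u. mset u = mset [i,j]} = {[i,j],[j,i]}"
  proof (rule set_eqI)
    fix u show "u \<in> {u. mset u = mset [i,j]} \<longleftrightarrow> u \<in> {[i,j],[j,i]}" using mset2[of u i j] by simp
  qed
  have K1: "(\<Sum>\<sigma>\<in>Sg 2 [i,j] [i,j]. sym_coef p [i,j] \<sigma>) = 1"
  proof -
    have "Sg 2 [i,j] [i,j] = {id}" unfolding Sg2' pl2t using assms(1) by simp
    then show ?thesis by (simp add: coef2id)
  qed
  have K2: "(\<Sum>\<sigma>\<in>Sg 2 [j,i] [i,j]. sym_coef p [j,i] \<sigma>) = p j i"
  proof -
    have "Sg 2 [j,i] [i,j] = {Transposition.transpose 0 1}" unfolding Sg2' pl2t using assms(1) by simp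
    then show ?thesis using coef2t[of p j i] by simp
  qed
  show ?thesis
    using symm_restrict[of "[i,j]" 2 n p f] assms unfolding U
    by (simp add: K1 K2)
qed

lemma symm2_ii:
  assumes "i < n"
  shows "symm n p 2 f [i,i] = f [i,i] * (1 + p i i)"
proof -
  have U: "{u. mset u = mset [i,i]} = {[i,i]}"
  proof (rule set_eqI)
    fix u show "u \<in> {u. mset u = mset [i,i]} \<longleftrightarrow> u \<in> {[i,i]}" using mset2[of u i i] by simp
  qed
  have K: "(\<Sum>\<sigma>\<in>Sg 2 [i,i] [i,i]. sym_coef p [i,i] \<sigma>) = 1 + p i i"
  proof -
    have "Sg 2 [i,i] [i,i] = {id, Transposition.transpose 0 1}" unfolding Sg2' pl2t by auto
    then show ?thesis using tid coef2t[of p i i] by (simp add: coef2id)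
  qed
  show ?thesis
    using symm_restrict[of "[i,i]" 2 n p f] assms unfolding U
    by (simp add: K)
qed




definition delta :: "nat list \<Rightarrow> 'a::field tens" where
  "delta w = (\<lambda>x. if x = w then 1 else 0)"

lemma in_T_lin:
  assumes "in_T n f" "in_T n g"
  shows "in_T n (\<lambda>w. a * f w + b * g w)"
proof -
  have "{w. a * f w + b * g w \<noteq> 0} \<subseteq> {w. f w \<noteq> 0} \<union> {w. g w \<noteq> 0}" by auto
  then show ?thesis using assms unfolding in_T_def by (auto intro: finite_subset)
qed

lemma symm_lin: "symm n p m (\<lambda>w. a * f w + b * g w) = (\<lambda>w. a * symm n p m f w + b * symm n p m g w)"
  unfolding symm_def by (simp add: sum.distrib sum_distrib_left algebra_simps)

lemma comp_lin: "comp m (\<lambda>w. a * f w + b * g w) = (\<lambda>w. a * comp m f w + b * comp m g w)"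
  unfolding comp_def by auto

lemma ideal_lin:
  assumes "f \<in> nichols_ideal n p" "g \<in> nichols_ideal n p"
  shows "(\<lambda>w. a * f w + b * g w) \<in> nichols_ideal n p"
  using assms unfolding nichols_ideal_def by (simp add: in_T_lin comp_lin symm_lin)

lemma symm_zero: "symm n p m (\<lambda>w. 0) = (\<lambda>w. 0)"
  unfolding symm_def by simp

lemma comp_zero: "comp m (\<lambda>w. 0) = (\<lambda>w. 0)"
  unfolding comp_def by simp

lemma in_T_zero: "in_T n (\<lambda>w. 0)" unfolding in_T_def by simp

lemma ideal_zero: "(\<lambda>w. 0) \<in> nichols_ideal n p"
  unfolding nichols_ideal_def by (simp add: in_T_zero comp_zero symm_zero)

definition Good :: "nat \<Rightarrow> (nat \<Rightarrow> nat \<Rightarrow> 'a::field) \<Rightarrow> 'a tens set \<Rightarrow> 'a tens set" where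
  "Good n p L = {f. \<exists>c l. l \<in> L \<and> (\<lambda>w. f w - c * tone w - l w) \<in> nichols_ideal n p}"

lemma Good_zero: "(\<lambda>w. 0) \<in> Good n p (tspan X)"
proof -
  have "(\<lambda>w. (0::'a) - 0 * tone w - 0) \<in> nichols_ideal n p" using ideal_zero by simp
  then show ?thesis unfolding Good_def using tspan_zero[of X] by blast
qed

lemma Good_lin:
  assumes "f \<in> Good n p (tspan X)" "g \<in> Good n p (tspan X)"
  shows "(\<lambda>w. a * f w + b * g w) \<in> Good n p (tspan X)"
proof -
  obtain c1 l1 where 1: "l1 \<in> tspan X" "(\<lambda>w. f w - c1 * tone w - l1 w) \<in> nichols_ideal n p"
    using assms(1) unfolding Good_def by blast
  obtain c2 l2 where 2: "l2 \<in> tspan X" "(\<lambda>w. g w - c2 * tone w - l2 w) \<in> nichols_ideal n p"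
    using assms(2) unfolding Good_def by blast
  have l: "(\<lambda>w. a * l1 w + b * l2 w) \<in> tspan X"
    by (intro tspan_add tspan_smult 1(1) 2(1))
  have "(\<lambda>w. a * (f w - c1 * tone w - l1 w) + b * (g w - c2 * tone w - l2 w)) \<in> nichols_ideal n p"
    using ideal_lin[OF 1(2) 2(2)] by simp
  moreover have "(\<lambda>w. a * (f w - c1 * tone w - l1 w) + b * (g w - c2 * tone w - l2 w))
     = (\<lambda>w. (a * f w + b * g w) - (a * c1 + b * c2) * tone w - (a * l1 w + b * l2 w))"
    by (simp add: algebra_simps)
  ultimately show ?thesis unfolding Good_def using l by fastforce
qed

lemma Good_all:
  assumes d: "\<And>w. set w \<subseteq> {..<n} \<Longrightarrow> delta w \<in> Good n p (tspan X)"
    and f: "in_T n f"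
  shows "f \<in> Good n p (tspan X)"
proof -
  let ?F = "{w. f w \<noteq> 0}"
  have fin: "finite ?F" and sub: "?F \<subseteq> {w. set w \<subseteq> {..<n}}" using f unfolding in_T_def by auto
  have "\<forall>G. finite G \<longrightarrow> G \<subseteq> {w. set w \<subseteq> {..<n}} \<longrightarrow> (\<lambda>x. \<Sum>w\<in>G. f w * delta w x) \<in> Good n p (tspan X)"
  proof (intro allI impI)
    fix G :: "nat list set" assume "finite G" "G \<subseteq> {w. set w \<subseteq> {..<n}}"
    then show "(\<lambda>x. \<Sum>w\<in>G. f w * delta w x) \<in> Good n p (tspan X)"
    proof (induction G rule: finite_induct)
      case empty then show ?case using Good_zero by simp
    next
      case (insert v G)
      then have "(\<lambda>x. f v * delta v x + 1 * (\<Sum>w\<in>G. f w * delta w x)) \<in> Good n p (tspan X)"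
        by (intro Good_lin d) auto
      then show ?case using insert by simp
    qed
  qed
  then have "(\<lambda>x. \<Sum>w\<in>?F. f w * delta w x) \<in> Good n p (tspan X)" using fin sub by blast
  moreover have "(\<lambda>x. \<Sum>w\<in>?F. f w * delta w x) = f"
  proof
    fix x
    have "(\<Sum>w\<in>?F. f w * delta w x) = (\<Sum>w\<in>?F. if x = w then f x else 0)"
      by (rule sum.cong) (auto simp: delta_def)
    also have "\<dots> = f x" using fin by (simp add: sum.delta)
    finally show "(\<Sum>w\<in>?F. f w * delta w x) = f x" .
  qed
  ultimately show ?thesis by simp
qed

lemma leaves_ne: "leaves t \<noteq> []"
  by (induction t) auto

lemma leaves_len: "length (leaves (Node s r)) \<ge> 2"
proof -
  have "length (leaves s) \<ge> 1" "length (leaves r) \<ge> 1" using leaves_ne[of s] leaves_ne[of r]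
    by (simp_all add: Suc_le_eq)
  then show ?thesis by simp
qed

lemma leaves_single: "leaves t = [x] \<Longrightarrow> t = Leaf x"
proof (cases t)
  case (Node s r)
  assume "leaves t = [x]"
  then have "length (leaves (Node s r)) = 1" using Node by simp
  then show ?thesis using leaves_len[of s r] by simp
qed simp

lemma leaves_two: "leaves t = [x,y] \<Longrightarrow> t = Node (Leaf x) (Leaf y)"
proof (cases t)
  case (Leaf k) then show "leaves t = [x,y] \<Longrightarrow> ?thesis" by simp
next
  case (Node s r)
  assume l: "leaves t = [x,y]"
  then have "leaves s @ leaves r = [x,y]" using Node by simp
  moreover have "length (leaves s) = 1"
  proof -
    have "length (leaves s) \<ge> 1" "length (leaves r) \<ge> 1" using leaves_ne[of s] leaves_ne[of r]
      by (simp_all add: Suc_le_eq)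
    moreover have "length (leaves s) + length (leaves r) = 2"
    proof -
      have "length (leaves s @ leaves r) = 2" using \<open>leaves s @ leaves r = [x,y]\<close> by simp
      then show ?thesis by simp
    qed
    ultimately show ?thesis by simp
  qed
  ultimately have "leaves s = [x] \<and> leaves r = [y]" by (simp add: append_eq_conv_conj)
  then show ?thesis using Node leaves_single by auto
qed

lemma tree2:
  assumes "mset (leaves t) = mset [a,b]"
  shows "t = Node (Leaf a) (Leaf b) \<or> t = Node (Leaf b) (Leaf a)"
proof -
  have "leaves t = [a,b] \<or> leaves t = [b,a]" using assms mset2[of "leaves t" a b] by simp
  then show ?thesis using leaves_two[of t a b] leaves_two[of t b a] by blast
qed

lemma tspan_eval_zero:
  assumes "l \<in> tspan S" "\<And>g. g \<in> S \<Longrightarrow> g w = 0"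
  shows "l w = 0"
proof -
  obtain m :: nat and c G where G: "\<forall>k<m. G k \<in> S" and l: "l = (\<lambda>w. \<Sum>k<m. c k * G k w)"
    using assms(1) by (rule tspanE)
  have "\<forall>k\<in>{..<m}. c k * G k w = 0" using G assms(2) by simp
  then show ?thesis unfolding l by (simp add: sum.neutral)
qed




lemma Phi_delta: "Phi p (mset w) (delta w) = chi p w"
proof -
  have "Phi p (mset w) (delta w) = (\<Sum>u\<in>{u. mset u = mset w}. if u = w then chi p w else 0)"
    unfolding Phi_def by (rule sum.cong) (auto simp: delta_def)
  also have "\<dots> = chi p w" using fin_perms[of "mset w"] by (simp add: sum.delta')
  finally show ?thesis .
qed

lemma symm_zero_outside:
  assumes "\<And>u. g u \<noteq> 0 \<Longrightarrow> mset u = M \<and> length u = m" "mset w' \<noteq> M"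
  shows "symm n p m g w' = 0"
  unfolding symm_def
proof (rule sum.neutral, intro ballI)
  fix u assume "u \<in> {u. length u = m \<and> set u \<subseteq> {..<n}}"
  show "g u * (\<Sum>\<sigma>\<in>{\<sigma>. \<sigma> permutes {..<m} \<and> perm_word u \<sigma> = w'}. sym_coef p u \<sigma>) = 0"
  proof (cases "g u = 0")
    case False
    then have mu: "mset u = M" "length u = m" using assms(1) by auto
    have E: "{\<sigma>. \<sigma> permutes {..<m} \<and> perm_word u \<sigma> = w'} = {}"
    proof (rule ccontr)
      assume "{\<sigma>. \<sigma> permutes {..<m} \<and> perm_word u \<sigma> = w'} \<noteq> {}"
      then obtain \<sigma> where "\<sigma> permutes {..<m}" "permute_list \<sigma> u = w'" by (auto simp: perm_word_eq)
      then have "mset w' = mset u" using mset_permute_list[of \<sigma> u] mu by simp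
      then show False using mu assms(2) by simp
    qed
    show ?thesis by (simp only: E sum.empty mult_zero_right)
  qed simp
qed

lemma in_I_homog:
  fixes g :: "'a::field_char_0 tens"
  assumes d: "distinct w" and lw: "length w \<ge> 2" and sw: "set w \<subseteq> {..<n}"
    and H: "\<forall>a<n. \<forall>b<n. p a b * p b a = 1"
    and sg: "supp_in g (mset w)" and z: "Phi p (mset w) g = 0"
  shows "g \<in> nichols_ideal n p"
proof -
  have gl: "mset u = mset w" if "g u \<noteq> 0" for u using sg that unfolding supp_in_def by blast
  have gl2: "length u = length w" if "g u \<noteq> 0" for u using gl[OF that] by (metis size_mset)
  have inT: "in_T n g"
  proof -
    have "{u. g u \<noteq> 0} \<subseteq> {u. mset u = mset w}" using gl by blast
    then have "finite {u. g u \<noteq> 0}" using fin_perms finite_subset by blast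
    moreover have "set u \<subseteq> {..<n}" if "g u \<noteq> 0" for u
      using gl[OF that] sw by (metis set_mset_mset)
    ultimately show ?thesis unfolding in_T_def by blast
  qed
  have g0: "g [] = 0" using gl2[of "[]"] lw by fastforce
  have g1: "\<forall>u. length u = 1 \<longrightarrow> g u = 0" using gl2 lw by fastforce
  have gs: "symm n p m (comp m g) = (\<lambda>_. 0)" if "m \<ge> 2" for m
  proof (cases "m = length w")
    case False
    have "comp m g = (\<lambda>_. 0)" unfolding comp_def using gl2 False by fastforce
    then show ?thesis by (simp add: symm_zero)
  next
    case True
    have cg: "comp m g = g" unfolding comp_def using gl2 True by fastforce
    show ?thesis
    proof
      fix w'
      show "symm n p m (comp m g) w' = 0"
      proof (cases "mset w' = mset w")
        case True
        have d': "distinct w'" using d True mset_eq_imp_distinct_iff by blast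
        have l': "length w' = m" using True \<open>m = length w\<close> by (metis size_mset)
        have s': "set w' \<subseteq> {..<n}" using True sw by (metis set_mset_mset)
        show ?thesis unfolding cg symm_distinct[OF d' l' s' H] True z by simp
      next
        case False
        show ?thesis unfolding cg
          by (rule symm_zero_outside[where M = "mset w"]) (use gl gl2 True False in auto)
      qed
    qed
  qed
  show ?thesis unfolding nichols_ideal_def using inT g0 g1 gs by blast
qed

lemma delta_rep_in_I:
  fixes w :: "nat list"
  assumes nd: "\<not> distinct w" and lw: "length w \<ge> 2" and sw: "set w \<subseteq> {..<n}"
    and H: "\<forall>a<n. \<forall>b<n. p a b * p b a = 1" and D: "\<forall>a<n. p a a = -1"
  shows "(delta w :: 'a::field_char_0 tens) \<in> nichols_ideal n p"
proof -
  have inT: "in_T n (delta w :: 'a tens)"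
  proof -
    have "{u. (delta w :: 'a tens) u \<noteq> 0} = {w}" by (auto simp: delta_def)
    then show ?thesis unfolding in_T_def using sw by (auto simp: delta_def)
  qed
  have g0: "(delta w :: 'a tens) [] = 0" using lw by (auto simp: delta_def)
  have g1: "\<forall>u. length u = 1 \<longrightarrow> (delta w :: 'a tens) u = 0" using lw by (auto simp: delta_def)
  have gs: "symm n p m (comp m (delta w)) = (\<lambda>_. (0::'a))" if "m \<ge> 2" for m
  proof (cases "m = length w")
    case False
    have "comp m (delta w) = (\<lambda>_. (0::'a))" unfolding comp_def delta_def using False by fastforce
    then show ?thesis by (simp add: symm_zero)
  next
    case True
    have cg: "comp m (delta w) = (delta w :: 'a tens)" unfolding comp_def delta_def using True by fastforce
    show ?thesis
    proof
      fix w'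
      have Hw: "\<forall>a\<in>set w. \<forall>b\<in>set w. p a b * p b a = 1" using H sw by blast
      have Dw: "\<forall>a\<in>set w. p a a = -1" using D sw by blast
      have "symm n p m (delta w) w' = (\<Sum>u\<in>{u. length u = m \<and> set u \<subseteq> {..<n}}. if u = w then (\<Sum>\<sigma>\<in>Sg m w w'. sym_coef p w \<sigma>) else 0)"
        unfolding symm_def Sg_def[symmetric] by (rule sum.cong) (auto simp: delta_def)
      also have "\<dots> = (\<Sum>\<sigma>\<in>Sg m w w'. sym_coef p w \<sigma>)"
      proof -
        have "finite {u. length u = m \<and> set u \<subseteq> {..<n}}"
          using finite_lists_length_eq[of "{..<n}" m] by (simp add: conj_commute)
        moreover have "w \<in> {u. length u = m \<and> set u \<subseteq> {..<n}}" using True sw by simp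
        ultimately show ?thesis by (simp add: sum.delta')
      qed
      also have "\<dots> = 0" using K_repeated[OF nd True[symmetric] Hw Dw] .
      finally show "symm n p m (comp m (delta w)) w' = 0" unfolding cg .
    qed
  qed
  show ?thesis unfolding nichols_ideal_def using inT g0 g1 gs by blast
qed




definition C3 :: "nat \<Rightarrow> (nat \<Rightarrow> nat \<Rightarrow> 'a::field) \<Rightarrow> bool" where
  "C3 n p \<longleftrightarrow> (\<forall>m\<ge>2. \<forall>h::nat \<Rightarrow> nat.
                 (\<forall>k<m. h k < n) \<and> (\<forall>k l. k < l \<and> l < m \<longrightarrow> h l < h k) \<longrightarrow>
                 (\<exists>\<tau>. \<tau> permutes {..<m} \<and>
                    (\<Prod>j<m - 1. (\<Prod>l\<in>{j+1..<m}. p (h (\<tau> j)) (h (\<tau> l))) - 1) \<noteq> 0))"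

lemma prod_zs:
  assumes "length zs = m" "\<And>j. j < m \<Longrightarrow> zs!j = h (\<tau> j)"
  shows "(\<Prod>j<length zs - 1. (\<Prod>l\<in>{j+1..<length zs}. p (zs!j) (zs!l)) - 1)
       = (\<Prod>j<m - 1. (\<Prod>l\<in>{j+1..<m}. p (h (\<tau> j)) (h (\<tau> l))) - 1)"
  using assms by (intro prod.cong refl) auto

lemma RN_nonzero:
  fixes p :: "nat \<Rightarrow> nat \<Rightarrow> 'a::field"
  assumes d: "distinct w" and lw: "length w = m" "m \<ge> 2" and sw: "set w \<subseteq> {..<n}"
    and H: "\<forall>a<n. \<forall>b<n. p a b * p b a = 1" and C: "C3 n p"
  obtains zs where "mset zs = mset w" "zs \<noteq> []" "Phi p (mset w) (evM (RN zs)) \<noteq> 0"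
proof -
  define s where "s = sort w"
  define h where "h = (\<lambda>k. rev s ! k)"
  have ls: "length s = m" unfolding s_def using lw by simp
  have ss: "sorted_wrt (<) s" unfolding s_def strict_sorted_iff using d by simp
  have sets: "set s = set w" unfolding s_def by simp
  have hn: "\<forall>k<m. h k < n"
  proof (intro allI impI)
    fix k assume "k < m"
    then have "h k \<in> set w" unfolding h_def using ls sets by (metis length_rev nth_mem set_rev)
    then show "h k < n" using sw by auto
  qed
  have hd: "\<forall>k l. k < l \<and> l < m \<longrightarrow> h l < h k"
  proof (intro allI impI)
    fix k l assume kl: "k < l \<and> l < m"
    have "h l = s ! (m - Suc l)" "h k = s ! (m - Suc k)" unfolding h_def using kl ls by (simp_all add: rev_nth)
    moreover have "m - Suc l < m - Suc k" "m - Suc k < length s" using kl ls by auto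
    ultimately show "h l < h k" using sorted_wrt_nth_less[OF ss] by simp
  qed
  obtain \<tau> where \<tau>: "\<tau> permutes {..<m}" "(\<Prod>j<m - 1. (\<Prod>l\<in>{j+1..<m}. p (h (\<tau> j)) (h (\<tau> l))) - 1) \<noteq> 0"
    using C lw(2) hn hd unfolding C3_def by blast
  define zs where "zs = permute_list \<tau> (rev s)"
  have \<tau>': "\<tau> permutes {..<length (rev s)}" using \<tau>(1) ls by simp
  have lz: "length zs = m" unfolding zs_def using ls by simp
  have zn: "zs!j = h (\<tau> j)" if "j < m" for j
    unfolding zs_def h_def using permute_list_nth[OF \<tau>'] that ls by simp
  have mz: "mset zs = mset w" unfolding zs_def s_def using mset_permute_list[OF \<tau>'] by (simp add: s_def)
  have dz: "distinct zs" using mz d mset_eq_imp_distinct_iff by blast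
  have zne: "zs \<noteq> []" using lz lw by auto
  have setz: "set zs = set w" using mz by (metis set_mset_mset)
  have nz: "\<forall>a\<in>set zs. \<forall>b\<in>set zs. p a b \<noteq> 0"
  proof (intro ballI)
    fix a b assume "a \<in> set zs" "b \<in> set zs"
    then have "a < n" "b < n" using setz sw by auto
    then have "p a b * p b a = 1" using H by blast
    then show "p a b \<noteq> 0" by auto
  qed
  have Hz: "\<forall>a\<in>set zs. \<forall>b\<in>set zs. a \<noteq> b \<longrightarrow> p a b * p b a = 1" using H setz sw by blast
  obtain D where D: "D \<noteq> 0" "Phi p (mset zs) (evM (RN zs)) =
           D * (\<Prod>j<length zs - 1. (\<Prod>l\<in>{j+1..<length zs}. p (zs!j) (zs!l)) - 1)"
    using Phi_RN[OF zne dz nz Hz] by blast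
  have "Phi p (mset w) (evM (RN zs)) \<noteq> 0"
    using D \<tau>(2) prod_zs[of zs m h \<tau> p, OF lz zn] mz by simp
  then show ?thesis using that mz zne by blast
qed

lemma tspan_evals_nil:
  assumes "\<And>t. supp_in (E t) (mset (leaves t))" "l \<in> tspan (E ` X)"
  shows "l [] = 0"
proof (rule tspan_eval_zero[OF assms(2)])
  fix g assume "g \<in> E ` X"
  then obtain t where "g = E t" by blast
  moreover have "mset [] \<noteq> mset (leaves t)" using leaves_ne[of t] by simp
  ultimately show "g [] = 0" using assms(1)[of t] unfolding supp_in_def by blast
qed

lemma GoodI: "l \<in> L \<Longrightarrow> (\<lambda>w. f w - c * tone w - l w) \<in> nichols_ideal n p \<Longrightarrow> f \<in> Good n p L"
  unfolding Good_def by blast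

lemma dir32:
  fixes E :: "btree \<Rightarrow> 'a::field_char_0 tens" and p :: "nat \<Rightarrow> nat \<Rightarrow> 'a"
  assumes E1: "\<And>i. E (Leaf i) = letter i"
    and E2: "\<And>t. supp_in (E t) (mset (leaves t))"
    and E3: "\<And>t. distinct (leaves t) \<Longrightarrow> (\<forall>a\<in>set (leaves t). \<forall>b\<in>set (leaves t). p a b * p b a = 1) \<Longrightarrow>
               \<exists>c. c \<noteq> 0 \<and> Phi p (mset (leaves t)) (E t) = c * Phi p (mset (leaves t)) (evM t)"
    and D: "\<forall>i<n. p i i = -1" and H': "\<forall>i<n. \<forall>j<n. i \<noteq> j \<longrightarrow> p i j * p j i = 1"
    and C: "C3 n p"
  shows "B_eq_F_plus n p (tspan (E ` {t. set (leaves t) \<subseteq> {..<n}}))"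
proof -
  let ?T = "{t. set (leaves t) \<subseteq> {..<n}}"
  let ?L = "tspan (E ` ?T)"
  have H: "\<forall>a<n. \<forall>b<n. p a b * p b a = 1"
  proof (intro allI impI)
    fix a b assume "a < n" "b < n"
    then show "p a b * p b a = 1" using D H' by (cases "a = b") auto
  qed
  have dg: "delta w \<in> Good n p ?L" if sw: "set w \<subseteq> {..<n}" for w
  proof -
    consider "w = []" | i where "w = [i]" | "length w \<ge> 2" "\<not> distinct w" | "length w \<ge> 2" "distinct w"
      by (cases w rule: remdups_adj.cases) auto
    then show ?thesis
    proof cases
      case 1
      have e: "(\<lambda>x. delta w x - 1 * tone x - (\<lambda>_. 0) x) = (\<lambda>_. (0::'a))"
        using 1 by (auto simp: delta_def tone_def)
      show ?thesis
      proof (rule GoodI[of "\<lambda>_. 0" ?L "delta w" 1 n p])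
        show "(\<lambda>_. 0) \<in> ?L" by (rule tspan_zero)
        show "(\<lambda>x. delta w x - 1 * tone x - (\<lambda>_. 0) x) \<in> nichols_ideal n p" unfolding e by (rule ideal_zero)
      qed
    next
      case (2 i)
      have lt: "Leaf i \<in> ?T" using sw 2 by simp
      have l: "E (Leaf i) \<in> ?L" using lt by (intro tspan_base) blast
      have e: "(\<lambda>x. delta w x - 0 * tone x - E (Leaf i) x) = (\<lambda>_. (0::'a))"
        using 2 E1 by (auto simp: delta_def letter_def)
      show ?thesis
      proof (rule GoodI[of "E (Leaf i)" ?L "delta w" 0 n p])
        show "E (Leaf i) \<in> ?L" by (rule l)
        show "(\<lambda>x. delta w x - 0 * tone x - E (Leaf i) x) \<in> nichols_ideal n p" unfolding e by (rule ideal_zero)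
      qed
    next
      case 3
      have e: "(\<lambda>x. delta w x - 0 * tone x - (\<lambda>_. 0) x) = (delta w :: 'a tens)" by simp
      show ?thesis
      proof (rule GoodI[of "\<lambda>_. 0" ?L "delta w" 0 n p])
        show "(\<lambda>_. 0) \<in> ?L" by (rule tspan_zero)
        show "(\<lambda>x. delta w x - 0 * tone x - (\<lambda>_. 0) x) \<in> nichols_ideal n p" unfolding e
          by (rule delta_rep_in_I[OF 3(2) 3(1) sw H D])
      qed
    next
      case 4
      obtain zs where zs: "mset zs = mset w" "zs \<noteq> []" "Phi p (mset w) (evM (RN zs)) \<noteq> 0"
        using RN_nonzero[OF 4(2) refl 4(1) sw H C] by blast
      let ?t = "RN zs"
      have lt: "leaves ?t = zs" using leaves_RN[OF zs(2)] .
      have dz: "distinct zs" using zs(1) 4(2) mset_eq_imp_distinct_iff by blast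
      have setz: "set zs = set w" using zs(1) by (metis set_mset_mset)
      have tT: "?t \<in> ?T" using lt setz sw by simp
      have Hz: "\<forall>a\<in>set zs. \<forall>b\<in>set zs. p a b * p b a = 1" using H setz sw by blast
      obtain c where c: "c \<noteq> 0" "Phi p (mset zs) (E ?t) = c * Phi p (mset zs) (evM ?t)"
        using E3[of ?t] lt dz Hz by auto
      define \<phi> where "\<phi> = Phi p (mset w) (E ?t)"
      have \<phi>nz: "\<phi> \<noteq> 0" unfolding \<phi>_def using c zs by simp
      define l where "l = (\<lambda>x. (chi p w / \<phi>) * E ?t x)"
      have lL: "l \<in> ?L" unfolding l_def using tT by (intro tspan_smult tspan_base) blast
      let ?g = "\<lambda>x. 1 * delta w x - (chi p w / \<phi>) * E ?t x"
      have sg: "supp_in ?g (mset w)"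
      proof (rule supp_lin)
        show "supp_in (delta w) (mset w)" unfolding supp_in_def delta_def by auto
        show "supp_in (E ?t) (mset w)" using E2[of ?t] lt zs(1) by simp
      qed
      have zg: "Phi p (mset w) ?g = 0"
        unfolding Phi_lin Phi_delta \<phi>_def[symmetric] using \<phi>nz by simp
      have gI: "?g \<in> nichols_ideal n p" using in_I_homog[OF 4(2) 4(1) sw H sg zg] .
      have e: "(\<lambda>x. delta w x - 0 * tone x - l x) = ?g" unfolding l_def by simp
      show ?thesis
      proof (rule GoodI[of l ?L "delta w" 0 n p])
        show "l \<in> ?L" by (rule lL)
        show "(\<lambda>x. delta w x - 0 * tone x - l x) \<in> nichols_ideal n p" unfolding e by (rule gI)
      qed
    qed
  qed
  have part1: "\<forall>f. in_T n f \<longrightarrow> (\<exists>c l. l \<in> ?L \<and> (\<lambda>w. f w - c * tone w - l w) \<in> nichols_ideal n p)"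
    using Good_all[OF dg] unfolding Good_def by blast
  have part2: "\<forall>c l. l \<in> ?L \<and> (\<lambda>w. c * tone w + l w) \<in> nichols_ideal n p \<longrightarrow> c = 0 \<and> l \<in> nichols_ideal n p"
  proof (intro allI impI)
    fix c l assume a: "l \<in> ?L \<and> (\<lambda>w. c * tone w + l w) \<in> nichols_ideal n p"
    have "l [] = 0" using tspan_evals_nil[OF E2] a by blast
    moreover have "c * tone [] + l [] = 0" using a unfolding nichols_ideal_def by blast
    ultimately have c0: "c = 0" by (simp add: tone_def)
    then have "(\<lambda>w. c * tone w + l w) = l" by simp
    then show "c = 0 \<and> l \<in> nichols_ideal n p" using a c0 by simp
  qed
  show ?thesis unfolding B_eq_F_plus_def using part1 part2 by blast
qed




lemma in_T_delta: "set w \<subseteq> {..<n} \<Longrightarrow> in_T n (delta w)"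
proof -
  assume "set w \<subseteq> {..<n}"
  moreover have "{u. (delta w :: 'a tens) u \<noteq> 0} = {w}" by (auto simp: delta_def)
  ultimately show ?thesis unfolding in_T_def by (auto simp: delta_def)
qed

lemma supp_zero_at:
  assumes "supp_in f A" "mset w \<noteq> A"
  shows "f w = 0"
  using assms unfolding supp_in_def by blast

lemma dir23_deg2:
  fixes E :: "btree \<Rightarrow> 'a::field_char_0 tens" and p \<alpha> :: "nat \<Rightarrow> nat \<Rightarrow> 'a"
  assumes E2: "\<And>t. supp_in (E t) (mset (leaves t))"
    and E5: "\<And>i j. E (Node (Leaf i) (Leaf j)) = (\<lambda>w. \<alpha> i j * delta [i,j] w - \<alpha> j i * delta [j,i] w)"
    and B: "B_eq_F_plus n p (tspan (E ` {t. set (leaves t) \<subseteq> {..<n}}))"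
  shows "(\<forall>i<n. p i i = -1) \<and> (\<forall>i<n. \<forall>j<n. i \<noteq> j \<longrightarrow>
           (\<exists>x y. \<alpha> j i * x + \<alpha> i j * y = 0 \<and> (1 - x) - y * p j i = 0 \<and> - y + (1 - x) * p i j = 0))"
proof -
  let ?T = "{t. set (leaves t) \<subseteq> {..<n}}"
  let ?L = "tspan (E ` ?T)"
  have B1: "\<And>f. in_T n f \<Longrightarrow> \<exists>c l. l \<in> ?L \<and> (\<lambda>w. f w - c * tone w - l w) \<in> nichols_ideal n p"
    using B unfolding B_eq_F_plus_def by blast
  have sym0: "symm n p 2 (comp 2 g) x = 0" if "g \<in> nichols_ideal n p" for g x
  proof -
    have "\<forall>m\<ge>2. symm n p m (comp m g) = (\<lambda>_. 0)" using that unfolding nichols_ideal_def by blast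
    then have "symm n p 2 (comp 2 g) = (\<lambda>_. 0)" by simp
    then show ?thesis by simp
  qed
  have A: "p i i = -1" if i: "i < n" for i
  proof -
    obtain c l where cl: "l \<in> ?L" "(\<lambda>w. delta [i,i] w - c * tone w - l w) \<in> nichols_ideal n p"
      using B1[OF in_T_delta, of "[i,i]"] i by auto
    have l0: "l [i,i] = 0"
    proof (rule tspan_eval_zero[OF cl(1)])
      fix g assume "g \<in> E ` ?T"
      then obtain t where t: "g = E t" by blast
      show "g [i,i] = 0"
      proof (cases "mset (leaves t) = mset [i,i]")
        case True
        then have "t = Node (Leaf i) (Leaf i)" using tree2 by blast
        then show ?thesis unfolding t by (simp add: E5 delta_def)
      next
        case False
        then show ?thesis unfolding t by (intro supp_zero_at[OF E2]) simp
      qed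
    qed
    have "symm n p 2 (comp 2 (\<lambda>w. delta [i,i] w - c * tone w - l w)) [i,i] = 0" using sym0[OF cl(2)] .
    then have "(1 - l [i,i]) * (1 + p i i) = 0"
      unfolding symm2_ii[OF i] by (simp add: comp_def delta_def tone_def)
    then show ?thesis unfolding l0 by (simp add: add_eq_0_iff)
  qed
  have Bp: "\<exists>x y. \<alpha> j i * x + \<alpha> i j * y = 0 \<and> (1 - x) - y * p j i = 0 \<and> - y + (1 - x) * p i j = 0"
    if ij: "i < n" "j < n" "i \<noteq> j" for i j
  proof -
    obtain c l where cl: "l \<in> ?L" "(\<lambda>w. delta [i,j] w - c * tone w - l w) \<in> nichols_ideal n p"
      using B1[OF in_T_delta, of "[i,j]"] ij by auto
    let ?\<Phi> = "\<lambda>f::'a tens. \<alpha> j i * f [i,j] + \<alpha> i j * f [j,i]"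
    have rel: "?\<Phi> l = 0"
    proof (rule tspan_linear[OF cl(1)])
      fix m :: nat and c g
      show "?\<Phi> (\<lambda>w. \<Sum>k<m. c k * g k w) = (\<Sum>k<m. c k * ?\<Phi> (g k))"
        by (simp add: sum.distrib sum_distrib_left algebra_simps)
    next
      fix g assume "g \<in> E ` ?T"
      then obtain t where t: "g = E t" by blast
      show "?\<Phi> g = 0"
      proof (cases "mset (leaves t) = mset [i,j]")
        case True
        then have "t = Node (Leaf i) (Leaf j) \<or> t = Node (Leaf j) (Leaf i)" using tree2 by blast
        then show ?thesis
        proof
          assume "t = Node (Leaf i) (Leaf j)"
          then show ?thesis unfolding t using ij(3) by (simp add: E5 delta_def mult.commute)
        next
          assume "t = Node (Leaf j) (Leaf i)"
          then show ?thesis unfolding t using ij(3) by (simp add: E5 delta_def mult.commute)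
        qed
      next
        case False
        have "mset [j,i] \<noteq> mset (leaves t)" using False by (simp add: add_mset_commute)
        then show ?thesis unfolding t using supp_zero_at[OF E2[of t], of "[i,j]"] supp_zero_at[OF E2[of t], of "[j,i]"] False
          by simp
      qed
    qed
    have s1: "symm n p 2 (comp 2 (\<lambda>w. delta [i,j] w - c * tone w - l w)) [i,j] = 0" using sym0[OF cl(2)] .
    have s2: "symm n p 2 (comp 2 (\<lambda>w. delta [i,j] w - c * tone w - l w)) [j,i] = 0" using sym0[OF cl(2)] .
    have e1: "(1 - l [i,j]) - l [j,i] * p j i = 0"
      using s1 unfolding symm2_ij[OF ij(3) ij(1) ij(2)] using ij(3) by (simp add: comp_def delta_def tone_def)
    have e2: "- l [j,i] + (1 - l [i,j]) * p i j = 0"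
      using s2 unfolding symm2_ij[OF ij(3)[symmetric] ij(2) ij(1)] using ij(3) by (simp add: comp_def delta_def tone_def)
    show ?thesis using rel e1 e2 by blast
  qed
  show ?thesis using A Bp by blast
qed




lemma Phi_smult: "Phi p M (\<lambda>x. a * f x) = a * Phi p M f"
  unfolding Phi_def by (simp add: sum_distrib_left mult.assoc)

lemma Phi_E_zero:
  fixes E :: "btree \<Rightarrow> 'a::field_char_0 tens" and p :: "nat \<Rightarrow> nat \<Rightarrow> 'a"
  assumes E2: "\<And>t. supp_in (E t) (mset (leaves t))"
    and E3: "\<And>t. distinct (leaves t) \<Longrightarrow> (\<forall>a\<in>set (leaves t). \<forall>b\<in>set (leaves t). p a b * p b a = 1) \<Longrightarrow>
               \<exists>c. c \<noteq> 0 \<and> Phi p (mset (leaves t)) (E t) = c * Phi p (mset (leaves t)) (evM t)"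
    and H: "\<forall>a<n. \<forall>b<n. p a b * p b a = 1"
    and lw: "length w = m" and hw: "\<And>k. k < m \<Longrightarrow> w!k = h k" and dw: "distinct w" and sw: "set w \<subseteq> {..<n}"
    and allz: "\<And>\<tau>. \<tau> permutes {..<m} \<Longrightarrow> (\<Prod>j<m - 1. (\<Prod>l\<in>{j+1..<m}. p (h (\<tau> j)) (h (\<tau> l))) - 1) = 0"
    and tT: "set (leaves t) \<subseteq> {..<n}"
  shows "Phi p (mset w) (E t) = 0"
proof (cases "mset (leaves t) = mset w")
  case False
  show ?thesis unfolding Phi_def
  proof (rule sum.neutral, intro ballI)
    fix u assume "u \<in> {u. mset u = mset w}"
    then have "mset u \<noteq> mset (leaves t)" using False by simp
    then show "E t u * chi p u = 0" using supp_zero_at[OF E2[of t]] by simp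
  qed
next
  case True
  have dl: "distinct (leaves t)" using True dw mset_eq_imp_distinct_iff by blast
  have sl: "set (leaves t) = set w" using True by (metis set_mset_mset)
  have Hl: "\<forall>a\<in>set (leaves t). \<forall>b\<in>set (leaves t). p a b * p b a = 1" using H sl sw by blast
  obtain c where c: "Phi p (mset (leaves t)) (E t) = c * Phi p (mset (leaves t)) (evM t)" using E3[OF dl Hl] by blast
  have "Phi p (mset w) (evM t) = 0"
  proof (rule tspan_linear[of "evM t" "RNS (mset w)" "Phi p (mset w)"])
    show "evM t \<in> tspan (RNS (mset w))" using evM_span[of t] True by simp
    show "Phi p (mset w) (\<lambda>w. \<Sum>k<m. c k * g k w) = (\<Sum>k<m. c k * Phi p (mset w) (g k))" for m :: nat and c g
      by (rule Phi_sum)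
  next
    fix g :: "'a tens" assume "g \<in> RNS (mset w)"
    then obtain zs where zs: "zs \<noteq> []" "mset zs = mset w" "g = evM (RN zs)" unfolding RNS_def by blast
    obtain \<tau> where \<tau>: "\<tau> permutes {..<length w}" "permute_list \<tau> w = zs"
      using mset_eq_permutation[OF zs(2)] by blast
    have lz: "length zs = m" using zs(2) lw by (metis size_mset)
    have zn: "zs!j = h (\<tau> j)" if "j < m" for j
    proof -
      have "zs!j = w!(\<tau> j)" using permute_list_nth[OF \<tau>(1)] \<tau>(2) that lw by auto
      moreover have "\<tau> j < m" using permutes_in_image[OF \<tau>(1)] that lw by simp
      ultimately show ?thesis using hw by simp
    qed
    have dz: "distinct zs" using zs(2) dw mset_eq_imp_distinct_iff by blast
    have setz: "set zs = set w" using zs(2) by (metis set_mset_mset)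
    have nz: "\<forall>a\<in>set zs. \<forall>b\<in>set zs. p a b \<noteq> 0"
    proof (intro ballI)
      fix a b assume "a \<in> set zs" "b \<in> set zs"
      then have "a < n" "b < n" using setz sw by auto
      then have "p a b * p b a = 1" using H by blast
      then show "p a b \<noteq> 0" by auto
    qed
    have Hz: "\<forall>a\<in>set zs. \<forall>b\<in>set zs. a \<noteq> b \<longrightarrow> p a b * p b a = 1" using H setz sw by blast
    obtain D where D: "Phi p (mset zs) (evM (RN zs)) =
           D * (\<Prod>j<length zs - 1. (\<Prod>l\<in>{j+1..<length zs}. p (zs!j) (zs!l)) - 1)"
      using Phi_RN[OF zs(1) dz nz Hz] by blast
    have "\<tau> permutes {..<m}" using \<tau>(1) lw by simp
    then show "Phi p (mset w) g = 0"
      using D prod_zs[of zs m h \<tau> p, OF lz zn] allz zs by simp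
  qed
  then show ?thesis using c True by simp
qed

lemma dir23_third:
  fixes E :: "btree \<Rightarrow> 'a::field_char_0 tens" and p :: "nat \<Rightarrow> nat \<Rightarrow> 'a"
  assumes E2: "\<And>t. supp_in (E t) (mset (leaves t))"
    and E3: "\<And>t. distinct (leaves t) \<Longrightarrow> (\<forall>a\<in>set (leaves t). \<forall>b\<in>set (leaves t). p a b * p b a = 1) \<Longrightarrow>
               \<exists>c. c \<noteq> 0 \<and> Phi p (mset (leaves t)) (E t) = c * Phi p (mset (leaves t)) (evM t)"
    and H: "\<forall>a<n. \<forall>b<n. p a b * p b a = 1"
    and B: "B_eq_F_plus n p (tspan (E ` {t. set (leaves t) \<subseteq> {..<n}}))"
  shows "C3 n p"
  unfolding C3_def
proof (intro allI impI)
  fix m :: nat and h :: "nat \<Rightarrow> nat"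
  assume m2: "m \<ge> 2" and hh: "(\<forall>k<m. h k < n) \<and> (\<forall>k l. k < l \<and> l < m \<longrightarrow> h l < h k)"
  show "\<exists>\<tau>. \<tau> permutes {..<m} \<and> (\<Prod>j<m - 1. (\<Prod>l\<in>{j+1..<m}. p (h (\<tau> j)) (h (\<tau> l))) - 1) \<noteq> 0"
  proof (rule ccontr)
    assume "\<not> ?thesis"
    then have allz: "\<And>\<tau>. \<tau> permutes {..<m} \<Longrightarrow> (\<Prod>j<m - 1. (\<Prod>l\<in>{j+1..<m}. p (h (\<tau> j)) (h (\<tau> l))) - 1) = 0"
      by auto
    define w where "w = map h [0..<m]"
    have lw: "length w = m" unfolding w_def by simp
    have hw: "w!k = h k" if "k < m" for k unfolding w_def using that by simp
    have dw: "distinct w" unfolding distinct_conv_nth lw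
    proof (intro allI impI)
      fix i j assume "i < m" "j < m" "i \<noteq> j"
      then show "w!i \<noteq> w!j"
      proof (cases "i < j")
        case True
        then have "h j < h i" using hh \<open>j < m\<close> by blast
        then show ?thesis using hw \<open>i < m\<close> \<open>j < m\<close> by simp
      next
        case False
        then have "j < i" using \<open>i \<noteq> j\<close> by simp
        then have "h i < h j" using hh \<open>i < m\<close> by blast
        then show ?thesis using hw \<open>i < m\<close> \<open>j < m\<close> by simp
      qed
    qed
    have sw: "set w \<subseteq> {..<n}" unfolding w_def using hh by auto
    let ?T = "{t. set (leaves t) \<subseteq> {..<n}}"
    have B1: "\<forall>f. in_T n f \<longrightarrow> (\<exists>c l. l \<in> tspan (E ` ?T) \<and> (\<lambda>w. f w - c * tone w - l w) \<in> nichols_ideal n p)"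
      using B unfolding B_eq_F_plus_def by (rule conjunct1)
    obtain c l where cl: "l \<in> tspan (E ` ?T)" "(\<lambda>x. delta w x - c * tone x - l x) \<in> nichols_ideal n p"
      using B1 in_T_delta[OF sw] by blast
    let ?g = "\<lambda>x. delta w x - c * tone x - l x"
    have Pl: "Phi p (mset w) l = 0"
    proof (rule tspan_linear[OF cl(1)])
      show "Phi p (mset w) (\<lambda>w. \<Sum>k<m. c k * g k w) = (\<Sum>k<m. c k * Phi p (mset w) (g k))" for m :: nat and c g
        by (rule Phi_sum)
    next
      fix g assume "g \<in> E ` ?T"
      then obtain t where t: "g = E t" "set (leaves t) \<subseteq> {..<n}" by blast
      show "Phi p (mset w) g = 0" unfolding t(1) by (rule Phi_E_zero[OF E2 E3 H lw hw dw sw allz t(2)])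
    qed
    have Pt: "Phi p (mset w) tone = 0"
      unfolding Phi_def
    proof (rule sum.neutral, intro ballI)
      fix u assume "u \<in> {u. mset u = mset w}"
      then have "length u = m" using lw by (metis mem_Collect_eq size_mset)
      then have "u \<noteq> []" using m2 by auto
      then show "tone u * chi p u = 0" by (simp add: tone_def)
    qed
    have Pg: "Phi p (mset w) ?g = chi p w"
    proof -
      have eq: "?g = (\<lambda>x. (\<lambda>x. 1 * delta w x - c * tone x) x - l x)" by simp
      have "Phi p (mset w) ?g = Phi p (mset w) (delta w) - c * Phi p (mset w) tone - Phi p (mset w) l"
        unfolding eq Phi_diff Phi_smult by simp
      then show ?thesis using Pl Pt Phi_delta by simp
    qed
    have Pc: "Phi p (mset w) (comp m ?g) = Phi p (mset w) ?g"
      unfolding Phi_def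
    proof (rule sum.cong[OF refl])
      fix u assume "u \<in> {u. mset u = mset w}"
      then have "length u = m" using lw by (metis mem_Collect_eq size_mset)
      then show "comp m ?g u * chi p u = ?g u * chi p u" unfolding comp_def by simp
    qed
    have "\<forall>m\<ge>2. symm n p m (comp m ?g) = (\<lambda>_. 0)" using cl(2) unfolding nichols_ideal_def by blast
    then have "symm n p m (comp m ?g) = (\<lambda>_. 0)" using m2 by blast
    then have "symm n p m (comp m ?g) w = 0" by simp
    then have "Phi p (mset w) (comp m ?g) / chi p w = 0" using symm_distinct[OF dw lw sw H] by simp
    moreover have "chi p w \<noteq> 0"
    proof (rule chi_nonzero, intro ballI)
      fix a b assume "a \<in> set w" "b \<in> set w"
      then have "a < n" "b < n" using sw by auto
      then have "p a b * p b a = 1" using H by blast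
      then show "p a b \<noteq> 0" by auto
    qed
    ultimately show False using Pc Pg by simp
  qed
qed




lemma alg_M:
  fixes x y q r :: "'a::field"
  assumes "x + y = 0" "(1 - x) - y * q = 0" "- y + (1 - x) * r = 0"
  shows "r * q = 1"
  using assms by algebra
lemma alg_L:
  fixes x y q r :: "'a::field"
  assumes e0: "r * x + q * y = 0" and e1: "(1 - x) - y * q = 0" and e2: "- y + (1 - x) * r = 0" and r: "r \<noteq> 0"
  shows "r * q = 1"
proof -
  have y: "y = (1 - x) * r" using e2 by simp
  have "r * (x + q - q * x) = 0" using e0 unfolding y by (simp add: algebra_simps)
  then have a: "x + q - q * x = 0" using r by simp
  have b: "(1 - x) * (1 - q * r) = 0" using e1 unfolding y by (simp add: algebra_simps)
  have "x \<noteq> 1" using a by auto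
  then have "1 - q * r = 0" using b by simp
  then show ?thesis by (simp add: mult.commute)
qed

lemma sg_cases: "sg t = 1 \<or> sg t = -1"
  by (induction t) auto

definition Cond :: "nat \<Rightarrow> (nat \<Rightarrow> nat \<Rightarrow> 'a::field) \<Rightarrow> bool" where
  "Cond n p \<longleftrightarrow> (\<forall>i<n. p i i = -1) \<and> (\<forall>i<n. \<forall>j<n. i \<noteq> j \<longrightarrow> p i j * p j i = 1) \<and> C3 n p"

lemma H_of:
  assumes D: "\<forall>i<n. p i i = -1" and H': "\<forall>i<n. \<forall>j<n. i \<noteq> j \<longrightarrow> p i j * p j i = (1::'a::field)"
  shows "\<forall>a<n. \<forall>b<n. p a b * p b a = 1"
proof (intro allI impI)
  fix a b assume "a < n" "b < n"
  then show "p a b * p b a = 1" using D H' by (cases "a = b") auto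
qed

lemma M_E3:
  "distinct (leaves t) \<Longrightarrow> (\<forall>a\<in>set (leaves t). \<forall>b\<in>set (leaves t). p a b * p b a = 1) \<Longrightarrow>
     \<exists>c. c \<noteq> 0 \<and> Phi p (mset (leaves t)) (evM t) = c * Phi p (mset (leaves t)) (evM t)"
  by (intro exI[of _ 1]) simp

lemma L_E3:
  fixes p :: "nat \<Rightarrow> nat \<Rightarrow> 'a::field_char_0"
  shows "distinct (leaves t) \<Longrightarrow> (\<forall>a\<in>set (leaves t). \<forall>b\<in>set (leaves t). p a b * p b a = 1) \<Longrightarrow>
     \<exists>c. c \<noteq> 0 \<and> Phi p (mset (leaves t)) (evL p t) = c * Phi p (mset (leaves t)) (evM t)"
proof -
  assume a: "distinct (leaves t)" "\<forall>a\<in>set (leaves t). \<forall>b\<in>set (leaves t). p a b * p b a = 1"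
  have "(of_int (sg t) :: 'a) \<noteq> 0" using sg_cases[of t] by auto
  then show ?thesis using Phi_evL[OF a] by blast
qed

lemma M_E5: "evM (Node (Leaf i) (Leaf j)) = (\<lambda>w. (\<lambda>_ _. 1::'a::field) i j * delta [i,j] w - (\<lambda>_ _. 1) j i * delta [j,i] w)"
  by (simp add: tmul_letter_letter delta_def)

lemma L_E5: "evL p (Node (Leaf i) (Leaf j)) = (\<lambda>w. (\<lambda>i j. p j i) i j * delta [i,j] w - (\<lambda>i j. p j i) j i * delta [j,i] w)"
  by (simp add: tmul_letter_letter delta_def pw_def)

lemma M_equiv:
  fixes p :: "nat \<Rightarrow> nat \<Rightarrow> 'a::field_char_0"
  shows "B_eq_F_plus n p (lie_minus n) \<longleftrightarrow> Cond n p"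
proof
  assume B: "B_eq_F_plus n p (lie_minus n)"
  have B': "B_eq_F_plus n p (tspan (evM ` {t. set (leaves t) \<subseteq> {..<n}}))"
    using B unfolding lie_minus_def .
  have d2: "(\<forall>i<n. p i i = -1) \<and> (\<forall>i<n. \<forall>j<n. i \<noteq> j \<longrightarrow>
           (\<exists>x y. 1 * x + 1 * y = 0 \<and> (1 - x) - y * p j i = 0 \<and> - y + (1 - x) * p i j = 0))"
    using dir23_deg2[where E = evM and \<alpha> = "\<lambda>_ _. 1", OF supp_evM M_E5 B'] by simp
  have D: "\<forall>i<n. p i i = -1" using d2 by blast
  have H': "\<forall>i<n. \<forall>j<n. i \<noteq> j \<longrightarrow> p i j * p j i = 1"
  proof (intro allI impI)
    fix i j assume "i < n" "j < n" "i \<noteq> j"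
    then obtain x y where "1 * x + 1 * y = 0" "(1 - x) - y * p j i = 0" "- y + (1 - x) * p i j = 0"
      using d2 by blast
    then show "p i j * p j i = 1" using alg_M[of x y "p j i" "p i j"] by simp
  qed
  have C: "C3 n p" using dir23_third[where E = evM, OF supp_evM M_E3 H_of[OF D H'] B'] .
  show "Cond n p" unfolding Cond_def using D H' C by blast
next
  assume "Cond n p"
  then have D: "\<forall>i<n. p i i = -1" and H': "\<forall>i<n. \<forall>j<n. i \<noteq> j \<longrightarrow> p i j * p j i = 1" and C: "C3 n p"
    unfolding Cond_def by blast+
  show "B_eq_F_plus n p (lie_minus n)"
    unfolding lie_minus_def by (rule dir32[where E = evM, OF _ supp_evM M_E3 D H' C]) simp
qed

lemma L_equiv:
  fixes p :: "nat \<Rightarrow> nat \<Rightarrow> 'a::field_char_0"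
  assumes nz: "\<forall>i<n. \<forall>j<n. p i j \<noteq> 0"
  shows "B_eq_F_plus n p (lie_L n p) \<longleftrightarrow> Cond n p"
proof
  assume B: "B_eq_F_plus n p (lie_L n p)"
  have B': "B_eq_F_plus n p (tspan (evL p ` {t. set (leaves t) \<subseteq> {..<n}}))"
    using B unfolding lie_L_def .
  have d2: "(\<forall>i<n. p i i = -1) \<and> (\<forall>i<n. \<forall>j<n. i \<noteq> j \<longrightarrow>
           (\<exists>x y. p i j * x + p j i * y = 0 \<and> (1 - x) - y * p j i = 0 \<and> - y + (1 - x) * p i j = 0))"
    using dir23_deg2[where E = "evL p" and \<alpha> = "\<lambda>i j. p j i", OF supp_evL L_E5 B'] by simp
  have D: "\<forall>i<n. p i i = -1" using d2 by blast
  have H': "\<forall>i<n. \<forall>j<n. i \<noteq> j \<longrightarrow> p i j * p j i = 1"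
  proof (intro allI impI)
    fix i j assume ij: "i < n" "j < n" "i \<noteq> j"
    then obtain x y where "p i j * x + p j i * y = 0" "(1 - x) - y * p j i = 0" "- y + (1 - x) * p i j = 0"
      using d2 by blast
    moreover have "p i j \<noteq> 0" using nz ij by blast
    ultimately show "p i j * p j i = 1" using alg_L[of "p i j" x "p j i" y] by simp
  qed
  have C: "C3 n p" using dir23_third[where E = "evL p", OF supp_evL L_E3 H_of[OF D H'] B'] .
  show "Cond n p" unfolding Cond_def using D H' C by blast
next
  assume "Cond n p"
  then have D: "\<forall>i<n. p i i = -1" and H': "\<forall>i<n. \<forall>j<n. i \<noteq> j \<longrightarrow> p i j * p j i = 1" and C: "C3 n p"
    unfolding Cond_def by blast+
  show "B_eq_F_plus n p (lie_L n p)"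
    unfolding lie_L_def by (rule dir32[where E = "evL p", OF _ supp_evL L_E3 D H' C]) simp
qed

theorem proposition5p4:
  fixes n :: nat and p :: "nat \<Rightarrow> nat \<Rightarrow> 'a::field_char_0"
  assumes "\<forall>i<n. \<forall>j<n. p i j \<noteq> 0"
  shows "(B_eq_F_plus n p (lie_L n p) \<longleftrightarrow> B_eq_F_plus n p (lie_minus n))
       \<and> (B_eq_F_plus n p (lie_minus n) \<longleftrightarrow>
          ((\<forall>i<n. p i i = -1) \<and> (\<forall>i<n. \<forall>j<n. i \<noteq> j \<longrightarrow> p i j * p j i = 1)
           \<and> (\<forall>m\<ge>2. \<forall>h::nat \<Rightarrow> nat.
                 (\<forall>k<m. h k < n) \<and> (\<forall>k l. k < l \<and> l < m \<longrightarrow> h l < h k) \<longrightarrow>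
                 (\<exists>\<tau>. \<tau> permutes {..<m} \<and>
                    (\<Prod>j<m - 1. (\<Prod>l\<in>{j+1..<m}. p (h (\<tau> j)) (h (\<tau> l))) - 1) \<noteq> 0))))"
  using L_equiv[OF assms] M_equiv[of n p] unfolding Cond_def C3_def by blast


end
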